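(* Let $\Phi_1,\Phi_2:\ell^\infty\to\mathcal{B}(H)$ be two strongly continuous, unital $*$-homomorphisms such that $\Phi_1[c_0],\Phi_2[c_0]\subseteq\mathcal{K}(H)$. Suppose there exist two partial isometries of finite index $v_1,v_2\in\mathcal{B}(H)$ such that $v_1\Phi_1(a)v_1^*-v_2\Phi_2(a)v_2^*\in\mathcal{K}(H)$ for all $a\in\ell^\infty$. Then the sequences $\{\mathrm{rk}(\Phi_1(P_k))\}_{k\in\mathbb{N}}$ and $\{\mathrm{rk}(\Phi_2(P_k))\}_{k\in\mathbb{N}}$ are eventually equal.
   Context: $H$ is a separable infinite-dimensional complex Hilbert space with a fixed orthonormal basis $\{\xi_k\}_{k\in\mathbb{N}}$; $\ell^\infty$ is identified with the algebra of operators diagonal with respect to this basis, and $c_0=\ell^\infty\cap\mathcal{K}(H)$. $P_k$ is the orthogonal projection onto $\mathbb{C}\xi_k$. A partial isometry of finite index is a Fredholm partial isometry, i.e. a partial isometry $v$ with $1-v^*v$ and $1-vv^*$ of finite rank. Strongly continuous means continuous for the strong operator topology on domain and codomain. *)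

theory Defs
  imports Complex_Main
begin

text \<open>H is modelled concretely as l2(N) with orthonormal basis xi_k = the k-th unit sequence.
Operators are maps on sequences which vanish outside l2.\<close>

type_synonym vec = "nat \<Rightarrow> complex"
type_synonym op = "vec \<Rightarrow> vec"

definition l2 :: "vec set" where
  "l2 = {x. summable (\<lambda>n. (cmod (x n))\<^sup>2)}"

definition l2norm :: "vec \<Rightarrow> real" where
  "l2norm x = sqrt (\<Sum>n. (cmod (x n))\<^sup>2)"

definition l2inner :: "vec \<Rightarrow> vec \<Rightarrow> complex" where
  "l2inner x y = (\<Sum>n. cnj (x n) * y n)"

definition bop :: "op \<Rightarrow> bool" where
  "bop T \<longleftrightarrow> (\<forall>x\<in>l2. T x \<in> l2) \<and> (\<forall>x. x \<notin> l2 \<longrightarrow> T x = (\<lambda>_. 0))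
     \<and> (\<forall>x\<in>l2. \<forall>y\<in>l2. T (\<lambda>n. x n + y n) = (\<lambda>n. T x n + T y n))
     \<and> (\<forall>x\<in>l2. \<forall>c. T (\<lambda>n. c * x n) = (\<lambda>n. c * T x n))
     \<and> (\<exists>C. \<forall>x\<in>l2. l2norm (T x) \<le> C * l2norm x)"

definition adj :: "op \<Rightarrow> op" where
  "adj T = (THE S. bop S \<and> (\<forall>x\<in>l2. \<forall>y\<in>l2. l2inner (T x) y = l2inner x (S y)))"

definition ident :: op where
  "ident x = (if x \<in> l2 then x else (\<lambda>_. 0))"

definition opminus :: "op \<Rightarrow> op \<Rightarrow> op" where
  "opminus T S = (\<lambda>x n. T x n - S x n)"

definition cspan :: "vec set \<Rightarrow> vec set" where
  "cspan F = {x. \<exists>c. x = (\<lambda>n. \<Sum>v\<in>F. c v * v n)}"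

definition finite_rank :: "op \<Rightarrow> bool" where
  "finite_rank T \<longleftrightarrow> (\<exists>F. finite F \<and> F \<subseteq> l2 \<and> T ` l2 \<subseteq> cspan F)"

text \<open>Rank = dimension of the range (meaningful for finite-rank operators).\<close>
definition rk :: "op \<Rightarrow> nat" where
  "rk T = (LEAST n. \<exists>F. finite F \<and> card F = n \<and> F \<subseteq> l2 \<and> T ` l2 \<subseteq> cspan F)"

definition compact_op :: "op \<Rightarrow> bool" where
  "compact_op T \<longleftrightarrow> (\<forall>e>0. \<exists>F. bop F \<and> finite_rank F \<and>
      (\<forall>x\<in>l2. l2norm (T x - F x) \<le> e * l2norm x))"

definition partial_isometry :: "op \<Rightarrow> bool" where
  "partial_isometry v \<longleftrightarrow> bop v \<and> v \<circ> adj v \<circ> v = v"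

definition finite_index_pi :: "op \<Rightarrow> bool" where
  "finite_index_pi v \<longleftrightarrow> partial_isometry v \<and>
     finite_rank (opminus ident (adj v \<circ> v)) \<and> finite_rank (opminus ident (v \<circ> adj v))"

definition linf :: "vec set" where
  "linf = {a. \<exists>B. \<forall>n. cmod (a n) \<le> B}"

definition c0 :: "vec set" where
  "c0 = {a. a \<longlonglongrightarrow> 0}"

text \<open>Diagonal operator of a sequence (the identification of l-infinity with diagonal operators).\<close>
definition diag :: "vec \<Rightarrow> op" where
  "diag a x = (if x \<in> l2 then (\<lambda>n. a n * x n) else (\<lambda>_. 0))"

definition Pk :: "nat \<Rightarrow> vec" where
  "Pk k = (\<lambda>n. if n = k then 1 else 0)"

definition unital_star_hom :: "(vec \<Rightarrow> op) \<Rightarrow> bool" where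
  "unital_star_hom \<Phi> \<longleftrightarrow>
     (\<forall>a\<in>linf. bop (\<Phi> a))
   \<and> (\<forall>a\<in>linf. \<forall>b\<in>linf. \<Phi> (\<lambda>n. a n + b n) = (\<lambda>x n. \<Phi> a x n + \<Phi> b x n))
   \<and> (\<forall>a\<in>linf. \<forall>c. \<Phi> (\<lambda>n. c * a n) = (\<lambda>x n. c * \<Phi> a x n))
   \<and> (\<forall>a\<in>linf. \<forall>b\<in>linf. \<Phi> (\<lambda>n. a n * b n) = \<Phi> a \<circ> \<Phi> b)
   \<and> (\<forall>a\<in>linf. \<Phi> (\<lambda>n. cnj (a n)) = adj (\<Phi> a))
   \<and> \<Phi> (\<lambda>_. 1) = ident"

text \<open>Continuity for the strong operator topologies (l-infinity carrying the SOT of diagonal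
operators), phrased via convergence along arbitrary filters (nets).\<close>
definition strongly_continuous :: "(vec \<Rightarrow> op) \<Rightarrow> bool" where
  "strongly_continuous \<Phi> \<longleftrightarrow> (\<forall>a0\<in>linf. \<forall>F. F \<le> principal linf \<longrightarrow>
     (\<forall>x\<in>l2. ((\<lambda>a. l2norm (\<lambda>n. diag a x n - diag a0 x n)) \<longlongrightarrow> 0) F) \<longrightarrow>
     (\<forall>x\<in>l2. ((\<lambda>a. l2norm (\<lambda>n. \<Phi> a x n - \<Phi> a0 x n)) \<longlongrightarrow> 0) F))"

end

theory Submission
  imports Defs "HOL-Analysis.L2_Norm" "HOL-Library.Function_Algebras"
begin

lemma l2_summ: "x \<in> l2 \<Longrightarrow> summable (\<lambda>n. (cmod (x n))\<^sup>2)"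
  by (simp add: l2_def)

lemma l2_bound_partial:
  assumes "\<And>N. (\<Sum>n<N. (cmod (x n))\<^sup>2) \<le> B"
  shows "x \<in> l2" "(\<Sum>n. (cmod (x n))\<^sup>2) \<le> B"
proof -
  have s: "summable (\<lambda>n. (cmod (x n))\<^sup>2)"
  proof (rule bounded_imp_summable[where B=B])
    show "(\<Sum>k\<le>n. (cmod (x k))\<^sup>2) \<le> B" for n using assms[of "Suc n"] by (simp only: lessThan_Suc_atMost)
  qed simp
  then show "x \<in> l2" by (simp add: l2_def)
  show "(\<Sum>n. (cmod (x n))\<^sup>2) \<le> B" using s assms by (rule suminf_le_const)
qed

lemma nsq_nonneg: "x \<in> l2 \<Longrightarrow> 0 \<le> (\<Sum>n. (cmod (x n))\<^sup>2)"
  by (intro suminf_nonneg l2_summ) auto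

lemma l2norm_nonneg: "x \<in> l2 \<Longrightarrow> l2norm x \<ge> 0"
  by (simp add: l2norm_def nsq_nonneg)

lemma l2norm_sq: "x \<in> l2 \<Longrightarrow> (l2norm x)\<^sup>2 = (\<Sum>n. (cmod (x n))\<^sup>2)"
  by (simp add: l2norm_def nsq_nonneg)

lemma partial_le_nsq: "x \<in> l2 \<Longrightarrow> (\<Sum>n<N. (cmod (x n))\<^sup>2) \<le> (\<Sum>n. (cmod (x n))\<^sup>2)"
  by (intro sum_le_suminf l2_summ) auto

lemma L2_partial_le: "x \<in> l2 \<Longrightarrow> L2_set (\<lambda>n. cmod (x n)) {..<N} \<le> l2norm x"
  unfolding L2_set_def l2norm_def by (intro real_sqrt_le_mono partial_le_nsq)

lemma l2_add:
  assumes "x \<in> l2" "y \<in> l2"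
  shows "(\<lambda>n. x n + y n) \<in> l2" "l2norm ((\<lambda>n. x n + y n)) \<le> l2norm x + l2norm y"
proof -
  have b: "(\<Sum>n<N. (cmod (x n + y n))\<^sup>2) \<le> (l2norm x + l2norm y)\<^sup>2" for N
  proof -
    have "L2_set (\<lambda>n. cmod (x n + y n)) {..<N} \<le> L2_set (\<lambda>n. cmod (x n) + cmod (y n)) {..<N}"
      by (rule L2_set_mono) (auto simp: norm_triangle_ineq)
    also have "\<dots> \<le> L2_set (\<lambda>n. cmod (x n)) {..<N} + L2_set (\<lambda>n. cmod (y n)) {..<N}"
      by (rule L2_set_triangle_ineq)
    also have "\<dots> \<le> l2norm x + l2norm y" by (intro add_mono L2_partial_le assms)
    finally have "sqrt (\<Sum>n<N. (cmod (x n + y n))\<^sup>2) \<le> l2norm x + l2norm y"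
      by (simp add: L2_set_def)
    moreover have nn: "0 \<le> (\<Sum>n<N. (cmod (x n + y n))\<^sup>2)" by (intro sum_nonneg) simp
    ultimately have "(sqrt (\<Sum>n<N. (cmod (x n + y n))\<^sup>2))\<^sup>2 \<le> (l2norm x + l2norm y)\<^sup>2"
      by (intro power_mono real_sqrt_ge_zero)
    then show ?thesis using nn by simp
  qed
  show "(\<lambda>n. x n + y n) \<in> l2" using l2_bound_partial(1)[OF b] .
  have "(\<Sum>n. (cmod (x n + y n))\<^sup>2) \<le> (l2norm x + l2norm y)\<^sup>2" using l2_bound_partial(2)[OF b] .
  then have "sqrt (\<Sum>n. (cmod (x n + y n))\<^sup>2) \<le> sqrt ((l2norm x + l2norm y)\<^sup>2)"
    by (rule real_sqrt_le_mono)
  also have "\<dots> = l2norm x + l2norm y"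
    using l2norm_nonneg[OF assms(1)] l2norm_nonneg[OF assms(2)] by simp
  finally show "l2norm (\<lambda>n. x n + y n) \<le> l2norm x + l2norm y"
    unfolding l2norm_def[of "\<lambda>n. x n + y n"] .
qed

lemma l2_scale:
  assumes "x \<in> l2"
  shows "(\<lambda>n. c * x n) \<in> l2" "l2norm ((\<lambda>n. c * x n)) = cmod c * l2norm x"
proof -
  have e: "(\<lambda>n. (cmod (c * x n))\<^sup>2) = (\<lambda>n. (cmod c)\<^sup>2 * (cmod (x n))\<^sup>2)"
    by (simp add: norm_mult power_mult_distrib)
  have s: "summable (\<lambda>n. (cmod (c * x n))\<^sup>2)" unfolding e
    using l2_summ[OF assms] by (rule summable_mult)
  then show "(\<lambda>n. c * x n) \<in> l2" by (simp add: l2_def)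
  have "(\<Sum>n. (cmod (c * x n))\<^sup>2) = (cmod c)\<^sup>2 * (\<Sum>n. (cmod (x n))\<^sup>2)"
    unfolding e using l2_summ[OF assms] by (rule suminf_mult)
  then show "l2norm ((\<lambda>n. c * x n)) = cmod c * l2norm x"
    by (simp add: l2norm_def real_sqrt_mult)
qed

lemma l2_zero: "(\<lambda>_. 0) \<in> l2" "l2norm (\<lambda>_. 0) = 0"
  unfolding l2_def l2norm_def by simp_all

lemma l2_uminus: "x \<in> l2 \<Longrightarrow> (\<lambda>n. - x n) \<in> l2 \<and> l2norm (\<lambda>n. - x n) = l2norm x"
proof -
  assume x: "x \<in> l2"
  have e: "(\<lambda>n. (-1) * x n) = (\<lambda>n. - x n)" by simp
  show ?thesis using l2_scale[OF x, of "-1"] unfolding e by simp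
qed

lemma l2_sub:
  assumes "x \<in> l2" "y \<in> l2"
  shows "(\<lambda>n. x n - y n) \<in> l2" "l2norm ((\<lambda>n. x n - y n)) \<le> l2norm x + l2norm y"
proof -
  have e: "(\<lambda>n. x n + - y n) = (\<lambda>n. x n - y n)" by simp
  show "(\<lambda>n. x n - y n) \<in> l2" using l2_add(1)[OF assms(1) l2_uminus[OF assms(2), THEN conjunct1]] unfolding e .
  show "l2norm ((\<lambda>n. x n - y n)) \<le> l2norm x + l2norm y"
    using l2_add(2)[OF assms(1) l2_uminus[OF assms(2), THEN conjunct1]] l2_uminus[OF assms(2)] unfolding e by simp
qed

lemma l2norm_sub_commute: "l2norm ((\<lambda>n. x n - y n)) = l2norm ((\<lambda>n. y n - x n))"
  unfolding l2norm_def by (simp add: norm_minus_commute)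

lemma l2norm_zero_iff: "x \<in> l2 \<Longrightarrow> l2norm x = 0 \<longleftrightarrow> x = (\<lambda>_. 0)"
proof
  assume x: "x \<in> l2" and "l2norm x = 0"
  then have z: "(\<Sum>n. (cmod (x n))\<^sup>2) = 0" by (simp add: l2norm_def nsq_nonneg)
  show "x = (\<lambda>_. 0)"
  proof
    fix n
    have "(cmod (x n))\<^sup>2 = 0"
      using suminf_eq_zero_iff[OF l2_summ[OF x]] z by auto
    then show "x n = 0" by simp
  qed
qed (simp add: l2_zero)

lemma inner_abs_summable:
  assumes "x \<in> l2" "y \<in> l2"
  shows "summable (\<lambda>n. cmod (cnj (x n) * y n))"
    "(\<Sum>n. cmod (cnj (x n) * y n)) \<le> l2norm x * l2norm y"
proof -
  have b: "(\<Sum>n<N. cmod (cnj (x n) * y n)) \<le> l2norm x * l2norm y" for N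
  proof -
    have "(\<Sum>n<N. cmod (cnj (x n) * y n)) = (\<Sum>n<N. \<bar>cmod (x n)\<bar> * \<bar>cmod (y n)\<bar>)"
      by (simp add: norm_mult)
    also have "\<dots> \<le> L2_set (\<lambda>n. cmod (x n)) {..<N} * L2_set (\<lambda>n. cmod (y n)) {..<N}"
      by (rule L2_set_mult_ineq)
    also have "\<dots> \<le> l2norm x * l2norm y"
      by (intro mult_mono L2_partial_le assms l2norm_nonneg) (auto simp: L2_set_def intro!: sum_nonneg)
    finally show ?thesis .
  qed
  show s: "summable (\<lambda>n. cmod (cnj (x n) * y n))"
  proof (rule bounded_imp_summable[where B="l2norm x * l2norm y"])
    show "(\<Sum>k\<le>n. cmod (cnj (x k) * y k)) \<le> l2norm x * l2norm y" for n using b[of "Suc n"] by (simp only: lessThan_Suc_atMost)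
  qed simp
  show "(\<Sum>n. cmod (cnj (x n) * y n)) \<le> l2norm x * l2norm y"
    using s b by (rule suminf_le_const)
qed

lemma inner_summable: "x \<in> l2 \<Longrightarrow> y \<in> l2 \<Longrightarrow> summable (\<lambda>n. cnj (x n) * y n)"
  by (rule summable_norm_cancel[OF inner_abs_summable(1)])

lemma cauchy_schwarz: "x \<in> l2 \<Longrightarrow> y \<in> l2 \<Longrightarrow> cmod (l2inner x y) \<le> l2norm x * l2norm y"
  unfolding l2inner_def
  by (rule order_trans[OF summable_norm[OF inner_abs_summable(1)] inner_abs_summable(2)])

lemma inner_self: "x \<in> l2 \<Longrightarrow> l2inner x x = complex_of_real ((l2norm x)\<^sup>2)"
proof -
  assume x: "x \<in> l2"
  have "(\<lambda>n. cnj (x n) * x n) = (\<lambda>n. complex_of_real ((cmod (x n))\<^sup>2))"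
  proof (rule ext)
    fix n show "cnj (x n) * x n = complex_of_real ((cmod (x n))\<^sup>2)"
      by (subst complex_norm_square) (simp add: mult.commute)
  qed
  then show ?thesis unfolding l2inner_def l2norm_sq[OF x]
    using suminf_of_real[OF l2_summ[OF x], where 'a=complex] by simp
qed

lemma inner_add_right: "x \<in> l2 \<Longrightarrow> y \<in> l2 \<Longrightarrow> z \<in> l2 \<Longrightarrow>
   l2inner x ((\<lambda>n. y n + z n)) = l2inner x y + l2inner x z"
  unfolding l2inner_def by (simp add: distrib_left suminf_add[OF inner_summable inner_summable])

lemma inner_scale_right: "x \<in> l2 \<Longrightarrow> y \<in> l2 \<Longrightarrow> l2inner x ((\<lambda>n. c * y n)) = c * l2inner x y"
  unfolding l2inner_def using suminf_mult[OF inner_summable, of x y c]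
  by (simp add: algebra_simps)

lemma inner_cnj: "x \<in> l2 \<Longrightarrow> y \<in> l2 \<Longrightarrow> l2inner y x = cnj (l2inner x y)"
proof -
  assume a: "x \<in> l2" "y \<in> l2"
  have "(\<lambda>n. cnj (cnj (x n) * y n)) sums cnj (\<Sum>n. cnj (x n) * y n)"
    unfolding sums_cnj by (rule summable_sums[OF inner_summable[OF a]])
  moreover have "(\<lambda>n. cnj (cnj (x n) * y n)) = (\<lambda>n. cnj (y n) * x n)" by (simp add: mult.commute)
  ultimately have "(\<lambda>n. cnj (y n) * x n) sums cnj (\<Sum>n. cnj (x n) * y n)" by simp
  then show ?thesis unfolding l2inner_def by (rule sums_unique[symmetric])
qed

lemma inner_add_left: "x \<in> l2 \<Longrightarrow> y \<in> l2 \<Longrightarrow> z \<in> l2 \<Longrightarrow>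
   l2inner (\<lambda>n. x n + y n) z = l2inner x z + l2inner y z"
proof -
  assume a: "x \<in> l2" "y \<in> l2" "z \<in> l2"
  have "l2inner (\<lambda>n. x n + y n) z = cnj (l2inner z (\<lambda>n. x n + y n))"
    using inner_cnj[OF a(3) l2_add(1)[OF a(1,2)]] .
  also have "\<dots> = cnj (l2inner z x + l2inner z y)" using inner_add_right[OF a(3,1,2)] by simp
  also have "\<dots> = l2inner x z + l2inner y z" using inner_cnj[OF a(3) a(1)] inner_cnj[OF a(3) a(2)] by simp
  finally show ?thesis .
qed

lemma inner_scale_left: "x \<in> l2 \<Longrightarrow> y \<in> l2 \<Longrightarrow> l2inner (\<lambda>n. c * x n) y = cnj c * l2inner x y"
proof -
  assume a: "x \<in> l2" "y \<in> l2"
  have "l2inner (\<lambda>n. c * x n) y = cnj (l2inner y (\<lambda>n. c * x n))"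
    using inner_cnj[OF a(2) l2_scale(1)[OF a(1)]] .
  also have "\<dots> = cnj (c * l2inner y x)" using inner_scale_right[OF a(2,1)] by simp
  also have "\<dots> = cnj c * l2inner x y" using inner_cnj[OF a(2) a(1)] by simp
  finally show ?thesis .
qed

lemma inner_zero_left: "l2inner (\<lambda>_. 0) y = 0"
  unfolding l2inner_def by simp

lemma inner_zero_right: "l2inner x (\<lambda>_. 0) = 0"
  unfolding l2inner_def by simp

lemma l2_sum: "finite I \<Longrightarrow> (\<forall>i\<in>I. v i \<in> l2) \<Longrightarrow> (\<lambda>m. \<Sum>i\<in>I. c i * v i m) \<in> l2"
proof (induction I rule: finite_induct)
  case empty then show ?case using l2_zero by simp
next
  case (insert j I)
  have e: "(\<lambda>m. \<Sum>i\<in>insert j I. c i * v i m) = (\<lambda>m. c j * v j m + (\<Sum>i\<in>I. c i * v i m))"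
    using insert(1,2) by simp
  show ?case unfolding e using insert l2_add(1) l2_scale(1) by simp
qed

lemma inner_sum_left: "finite I \<Longrightarrow> (\<forall>i\<in>I. v i \<in> l2) \<Longrightarrow> y \<in> l2 \<Longrightarrow>
  l2inner (\<lambda>m. \<Sum>i\<in>I. c i * v i m) y = (\<Sum>i\<in>I. cnj (c i) * l2inner (v i) y)"
proof (induction I rule: finite_induct)
  case empty then show ?case by (simp add: inner_zero_left)
next
  case (insert j I)
  have e: "(\<lambda>m. \<Sum>i\<in>insert j I. c i * v i m) = (\<lambda>m. c j * v j m + (\<Sum>i\<in>I. c i * v i m))"
    using insert(1,2) by simp
  have vj: "v j \<in> l2" and vI: "\<forall>i\<in>I. v i \<in> l2" using insert(4) by auto
  have "l2inner (\<lambda>m. c j * v j m + (\<Sum>i\<in>I. c i * v i m)) y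
      = l2inner (\<lambda>m. c j * v j m) y + l2inner (\<lambda>m. \<Sum>i\<in>I. c i * v i m) y"
    by (rule inner_add_left[OF l2_scale(1)[OF vj] l2_sum[OF insert(1) vI] insert(5)])
  also have "\<dots> = cnj (c j) * l2inner (v j) y + (\<Sum>i\<in>I. cnj (c i) * l2inner (v i) y)"
    using inner_scale_left[OF vj insert(5)] insert(3)[OF vI insert(5)] by simp
  finally show ?case unfolding e using insert(1,2) by simp
qed

lemma Pk_l2: "Pk k \<in> l2"
proof -
  have "(\<lambda>n. (cmod (Pk k n))\<^sup>2) = (\<lambda>n. if n = k then 1 else 0)" by (auto simp: Pk_def)
  moreover have "summable (\<lambda>n. if n = k then (1::real) else 0)"
    using sums_single[of k "\<lambda>_. (1::real)"] by (simp add: sums_iff)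
  ultimately show ?thesis by (simp add: l2_def)
qed

lemma inner_Pk: "l2inner (Pk k) y = y k"
proof -
  have "(\<lambda>n. cnj (Pk k n) * y n) = (\<lambda>n. if n = k then y n else 0)" by (auto simp: Pk_def)
  then show ?thesis unfolding l2inner_def using sums_single[of k y] by (simp add: sums_iff)
qed

lemma inner_Pk_right: "l2inner y (Pk k) = cnj (y k)"
proof -
  have "(\<lambda>n. cnj (y n) * Pk k n) = (\<lambda>n. if n = k then cnj (y n) else 0)" by (auto simp: Pk_def)
  then show ?thesis unfolding l2inner_def using sums_single[of k "\<lambda>n. cnj (y n)"] by (simp add: sums_iff)
qed

definition trunc :: "nat \<Rightarrow> vec \<Rightarrow> vec" where
  "trunc N x = (\<lambda>m. if m < N then x m else 0)"

lemma trunc_sum: "trunc N x = (\<lambda>m. \<Sum>n\<in>{..<N}. x n * Pk n m)"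
  by (rule ext) (simp add: trunc_def Pk_def if_distrib sum.delta sum.delta' cong: if_cong)

lemma trunc_l2: "trunc N x \<in> l2"
  unfolding trunc_sum by (rule l2_sum) (auto simp: Pk_l2)

lemma tail_tendsto:
  assumes x: "x \<in> l2"
  shows "(\<lambda>N. l2norm (\<lambda>m. x m - trunc N x m)) \<longlonglongrightarrow> 0"
proof -
  let ?g = "\<lambda>m. (cmod (x m))\<^sup>2"
  have g: "?g sums (\<Sum>m. ?g m)" using l2_summ[OF x] by (rule summable_sums)
  have eq: "(\<Sum>m. (cmod (x m - trunc N x m))\<^sup>2) = (\<Sum>m. ?g m) - (\<Sum>m<N. ?g m)" for N
  proof -
    have f: "(\<lambda>m. if m \<in> {..<N} then ?g m else 0) sums (\<Sum>m\<in>{..<N}. ?g m)"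
      by (rule sums_If_finite_set) simp
    have "(\<lambda>m. ?g m - (if m \<in> {..<N} then ?g m else 0)) sums ((\<Sum>m. ?g m) - (\<Sum>m<N. ?g m))"
      using sums_diff[OF g f] by simp
    moreover have "(\<lambda>m. ?g m - (if m \<in> {..<N} then ?g m else 0)) = (\<lambda>m. (cmod (x m - trunc N x m))\<^sup>2)"
      by (rule ext) (simp add: trunc_def)
    ultimately show ?thesis by (simp add: sums_iff)
  qed
  have "(\<lambda>N. (\<Sum>m. ?g m) - (\<Sum>m<N. ?g m)) \<longlonglongrightarrow> (\<Sum>m. ?g m) - (\<Sum>m. ?g m)"
    by (intro tendsto_diff tendsto_const summable_LIMSEQ l2_summ x)
  then have "(\<lambda>N. sqrt ((\<Sum>m. ?g m) - (\<Sum>m<N. ?g m))) \<longlonglongrightarrow> sqrt 0"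
    by (intro tendsto_real_sqrt) simp
  then show ?thesis unfolding l2norm_def eq by simp
qed

lemma bop_l2: "bop T \<Longrightarrow> x \<in> l2 \<Longrightarrow> T x \<in> l2"
  by (simp add: bop_def)
lemma bop_out: "bop T \<Longrightarrow> x \<notin> l2 \<Longrightarrow> T x = (\<lambda>_. 0)"
  by (simp add: bop_def)
lemma bop_add: "bop T \<Longrightarrow> x \<in> l2 \<Longrightarrow> y \<in> l2 \<Longrightarrow> T (\<lambda>n. x n + y n) = (\<lambda>n. T x n + T y n)"
  by (simp add: bop_def)
lemma bop_scale: "bop T \<Longrightarrow> x \<in> l2 \<Longrightarrow> T (\<lambda>n. c * x n) = (\<lambda>n. c * T x n)"
  by (simp add: bop_def)
lemma bop_bound: "bop T \<Longrightarrow> \<exists>C\<ge>0. \<forall>x\<in>l2. l2norm (T x) \<le> C * l2norm x"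
proof -
  assume "bop T"
  then obtain C where C: "\<forall>x\<in>l2. l2norm (T x) \<le> C * l2norm x" by (auto simp: bop_def)
  have "\<forall>x\<in>l2. l2norm (T x) \<le> max C 0 * l2norm x"
  proof
    fix x assume x: "x \<in> l2"
    have "C * l2norm x \<le> max C 0 * l2norm x" by (intro mult_right_mono l2norm_nonneg x) simp
    then show "l2norm (T x) \<le> max C 0 * l2norm x" using C x by auto
  qed
  then show ?thesis by (intro exI[of _ "max C 0"]) simp
qed

lemma bop_zero: "bop T \<Longrightarrow> T (\<lambda>_. 0) = (\<lambda>_. 0)"
  using bop_scale[of T "\<lambda>_. 0" 0] l2_zero by simp

lemma bop_uminus: "bop T \<Longrightarrow> x \<in> l2 \<Longrightarrow> T (\<lambda>n. - x n) = (\<lambda>n. - T x n)"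
  using bop_scale[of T x "-1"] by simp

lemma bop_sub: "bop T \<Longrightarrow> x \<in> l2 \<Longrightarrow> y \<in> l2 \<Longrightarrow> T (\<lambda>n. x n - y n) = (\<lambda>n. T x n - T y n)"
proof -
  assume a: "bop T" "x \<in> l2" "y \<in> l2"
  have e: "(\<lambda>n. x n - y n) = (\<lambda>n. x n + (- y n))" by simp
  show ?thesis unfolding e
    using bop_add[OF a(1,2) l2_uminus[OF a(3), THEN conjunct1]] bop_uminus[OF a(1,3)] by simp
qed

lemma bop_sum: assumes T: "bop T" shows "finite I \<Longrightarrow> (\<forall>i\<in>I. v i \<in> l2) \<Longrightarrow>
   T (\<lambda>m. \<Sum>i\<in>I. c i * v i m) = (\<lambda>m. \<Sum>i\<in>I. c i * T (v i) m)"
proof (induction I rule: finite_induct)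
  case empty then show ?case using bop_zero[OF T] by simp
next
  case (insert j I)
  have e: "(\<lambda>m. \<Sum>i\<in>insert j I. c i * v i m) = (\<lambda>m. c j * v j m + (\<Sum>i\<in>I. c i * v i m))"
    using insert(1,2) by simp
  have vj: "v j \<in> l2" and vI: "\<forall>i\<in>I. v i \<in> l2" using insert(4) by auto
  have "T (\<lambda>m. c j * v j m + (\<Sum>i\<in>I. c i * v i m)) = (\<lambda>m. T (\<lambda>m. c j * v j m) m + T (\<lambda>m. \<Sum>i\<in>I. c i * v i m) m)"
    by (rule bop_add[OF T l2_scale(1)[OF vj] l2_sum[OF insert(1) vI]])
  also have "\<dots> = (\<lambda>m. c j * T (v j) m + (\<Sum>i\<in>I. c i * T (v i) m))"
    using bop_scale[OF T vj] insert(3)[OF vI] by simp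
  finally show ?case unfolding e using insert(1,2) by simp
qed

lemma bop_norm_sub:
  assumes "bop T" "\<forall>x\<in>l2. l2norm (T x) \<le> C * l2norm x" "x \<in> l2" "y \<in> l2"
  shows "l2norm (\<lambda>n. T x n - T y n) \<le> C * l2norm (\<lambda>n. x n - y n)"
  using assms(2) l2_sub(1)[OF assms(3,4)] bop_sub[OF assms(1,3,4)] by metis

lemma null_cmp:
  fixes f :: "'a \<Rightarrow> 'b::real_normed_vector"
  assumes "(g \<longlongrightarrow> (0::real)) F" "eventually (\<lambda>x. norm (f x) \<le> g x) F"
  shows "(f \<longlongrightarrow> 0) F"
proof (rule tendsto_0_le[OF assms(1), where K=1])
  show "eventually (\<lambda>x. norm (f x) \<le> norm (g x) * 1) F"
    using assms(2) by eventually_elim auto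
qed

lemma cnj_mult_self: "cnj z * z = complex_of_real ((cmod z)\<^sup>2)"
  by (subst complex_norm_square) (simp add: mult.commute)

lemma inner_sub_left: "x \<in> l2 \<Longrightarrow> y \<in> l2 \<Longrightarrow> z \<in> l2 \<Longrightarrow>
   l2inner (\<lambda>n. x n - y n) z = l2inner x z - l2inner y z"
proof -
  assume a: "x \<in> l2" "y \<in> l2" "z \<in> l2"
  have "l2inner (\<lambda>n. x n + - y n) z = l2inner x z + l2inner (\<lambda>n. - y n) z"
    by (rule inner_add_left[OF a(1) l2_uminus[OF a(2), THEN conjunct1] a(3)])
  moreover have "l2inner (\<lambda>n. - y n) z = - l2inner y z" using inner_scale_left[OF a(2,3), of "-1"] by simp
  ultimately show ?thesis by simp
qed

lemma inner_sub_right: "x \<in> l2 \<Longrightarrow> y \<in> l2 \<Longrightarrow> z \<in> l2 \<Longrightarrow>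
   l2inner z (\<lambda>n. x n - y n) = l2inner z x - l2inner z y"
proof -
  assume a: "x \<in> l2" "y \<in> l2" "z \<in> l2"
  have "l2inner z (\<lambda>n. x n + - y n) = l2inner z x + l2inner z (\<lambda>n. - y n)"
    by (rule inner_add_right[OF a(3) a(1) l2_uminus[OF a(2), THEN conjunct1]])
  moreover have "l2inner z (\<lambda>n. - y n) = - l2inner z y" using inner_scale_right[OF a(3,2), of "-1"] by simp
  ultimately show ?thesis by simp
qed

lemma trunc_norm_sq: "(l2norm (trunc N s))\<^sup>2 = (\<Sum>n<N. (cmod (s n))\<^sup>2)"
proof -
  have "(\<Sum>m. (cmod (trunc N s m))\<^sup>2) = (\<Sum>m\<in>{..<N}. (cmod (trunc N s m))\<^sup>2)"
    by (rule suminf_finite) (auto simp: trunc_def)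
  also have "\<dots> = (\<Sum>n<N. (cmod (s n))\<^sup>2)" by (intro sum.cong) (auto simp: trunc_def)
  finally show ?thesis using l2norm_sq[OF trunc_l2] by simp
qed

definition adjop :: "op \<Rightarrow> op" where
  "adjop T y = (if y \<in> l2 then (\<lambda>n. l2inner (T (Pk n)) y) else (\<lambda>_. 0))"

lemma adjop_bound:
  assumes T: "bop T" and C: "C \<ge> 0" "\<forall>x\<in>l2. l2norm (T x) \<le> C * l2norm x" and y: "y \<in> l2"
  shows "adjop T y \<in> l2" "l2norm (adjop T y) \<le> C * l2norm y"
proof -
  define s where "s n = l2inner (T (Pk n)) y" for n
  have TP: "\<forall>n\<in>{..<N}. T (Pk n) \<in> l2" for N using bop_l2[OF T Pk_l2] by simp
  have b: "(\<Sum>n<N. (cmod (s n))\<^sup>2) \<le> (C * l2norm y)\<^sup>2" for N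
  proof -
    define A where "A = (\<Sum>n<N. (cmod (s n))\<^sup>2)"
    have A0: "A \<ge> 0" unfolding A_def by (intro sum_nonneg) simp
    have z: "trunc N s \<in> l2" by (rule trunc_l2)
    have Tz: "T (trunc N s) = (\<lambda>m. \<Sum>n\<in>{..<N}. s n * T (Pk n) m)"
      unfolding trunc_sum by (rule bop_sum[OF T]) (auto simp: Pk_l2)
    have "l2inner (T (trunc N s)) y = (\<Sum>n\<in>{..<N}. cnj (s n) * l2inner (T (Pk n)) y)"
      unfolding Tz by (rule inner_sum_left[OF _ TP y]) simp
    also have "\<dots> = (\<Sum>n\<in>{..<N}. complex_of_real ((cmod (s n))\<^sup>2))"
      unfolding s_def[symmetric]
      by (intro sum.cong refl) (rule cnj_mult_self)
    also have "\<dots> = complex_of_real A" unfolding A_def by simp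
    finally have eqA: "l2inner (T (trunc N s)) y = complex_of_real A" .
    have "A = cmod (l2inner (T (trunc N s)) y)" using eqA A0 by simp
    also have "\<dots> \<le> l2norm (T (trunc N s)) * l2norm y"
      by (rule cauchy_schwarz[OF bop_l2[OF T z] y])
    also have "\<dots> \<le> (C * l2norm (trunc N s)) * l2norm y"
      by (intro mult_right_mono l2norm_nonneg y) (use C(2) z in auto)
    also have "l2norm (trunc N s) = sqrt A"
      using trunc_norm_sq[of N s] l2norm_nonneg[OF z] unfolding A_def
      by (metis real_sqrt_unique)
    finally have "sqrt A * sqrt A \<le> sqrt A * (C * l2norm y)" using A0
      by (simp add: algebra_simps)
    then have "sqrt A \<le> C * l2norm y \<or> sqrt A = 0"
      using A0 by (metis mult_le_cancel_left real_sqrt_ge_zero order_le_less)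
    then have "sqrt A \<le> C * l2norm y" using C(1) l2norm_nonneg[OF y] by auto
    then have "(sqrt A)\<^sup>2 \<le> (C * l2norm y)\<^sup>2" by (intro power_mono) (auto simp: A0)
    then show ?thesis using A0 unfolding A_def by simp
  qed
  have av: "adjop T y = s" using y by (simp add: adjop_def s_def fun_eq_iff)
  show "adjop T y \<in> l2" unfolding av using l2_bound_partial(1)[OF b] .
  have "(\<Sum>n. (cmod (s n))\<^sup>2) \<le> (C * l2norm y)\<^sup>2" using l2_bound_partial(2)[OF b] .
  then have "sqrt (\<Sum>n. (cmod (s n))\<^sup>2) \<le> sqrt ((C * l2norm y)\<^sup>2)" by (rule real_sqrt_le_mono)
  also have "\<dots> = C * l2norm y" using C(1) l2norm_nonneg[OF y] by simp
  finally show "l2norm (adjop T y) \<le> C * l2norm y" unfolding av l2norm_def .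
qed

lemma adjop_rel:
  assumes T: "bop T" and x: "x \<in> l2" and y: "y \<in> l2"
  shows "l2inner (T x) y = l2inner x (adjop T y)"
proof -
  obtain C where C: "C \<ge> 0" "\<forall>x\<in>l2. l2norm (T x) \<le> C * l2norm x" using bop_bound[OF T] by blast
  define s where "s n = l2inner (T (Pk n)) y" for n
  have av: "adjop T y = s" using y by (simp add: adjop_def s_def fun_eq_iff)
  have TP: "\<forall>n\<in>{..<N}. T (Pk n) \<in> l2" for N using bop_l2[OF T Pk_l2] by simp
  have part: "(\<Sum>n<N. cnj (x n) * s n) = l2inner (T (trunc N x)) y" for N
  proof -
    have Tz: "T (trunc N x) = (\<lambda>m. \<Sum>n\<in>{..<N}. x n * T (Pk n) m)"
      unfolding trunc_sum by (rule bop_sum[OF T]) (auto simp: Pk_l2)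
    show ?thesis unfolding Tz s_def by (rule inner_sum_left[OF _ TP y, symmetric]) simp
  qed
  have "(\<lambda>N. l2inner (T (trunc N x)) y - l2inner (T x) y) \<longlonglongrightarrow> 0"
  proof (rule null_cmp)
    show "(\<lambda>N. C * l2norm (\<lambda>m. x m - trunc N x m) * l2norm y) \<longlonglongrightarrow> 0"
      using tendsto_mult[OF tendsto_mult[OF tendsto_const tail_tendsto[OF x]] tendsto_const, of C "l2norm y"]
      by simp
    show "\<forall>\<^sub>F N in sequentially. norm (l2inner (T (trunc N x)) y - l2inner (T x) y)
        \<le> C * l2norm (\<lambda>m. x m - trunc N x m) * l2norm y"
    proof (intro always_eventually allI)
      fix N
      have tl: "trunc N x \<in> l2" by (rule trunc_l2)
      have d: "(\<lambda>m. x m - trunc N x m) \<in> l2" by (rule l2_sub(1)[OF x tl])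
      have "norm (l2inner (T (trunc N x)) y - l2inner (T x) y) = norm (l2inner (T x) y - l2inner (T (trunc N x)) y)"
        by (simp add: norm_minus_commute)
      also have "\<dots> = cmod (l2inner (\<lambda>m. T x m - T (trunc N x) m) y)"
        using inner_sub_left[OF bop_l2[OF T x] bop_l2[OF T tl] y] by simp
      also have "\<dots> = cmod (l2inner (T (\<lambda>m. x m - trunc N x m)) y)"
        using bop_sub[OF T x tl] by simp
      also have "\<dots> \<le> l2norm (T (\<lambda>m. x m - trunc N x m)) * l2norm y"
        by (rule cauchy_schwarz[OF bop_l2[OF T d] y])
      also have "\<dots> \<le> C * l2norm (\<lambda>m. x m - trunc N x m) * l2norm y"
        by (intro mult_right_mono l2norm_nonneg y) (use C(2) d in auto)
      finally show "norm (l2inner (T (trunc N x)) y - l2inner (T x) y)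
        \<le> C * l2norm (\<lambda>m. x m - trunc N x m) * l2norm y" .
    qed
  qed
  then have "(\<lambda>N. l2inner (T (trunc N x)) y) \<longlonglongrightarrow> l2inner (T x) y"
    by (simp add: LIM_zero_iff)
  then have "(\<lambda>n. cnj (x n) * s n) sums l2inner (T x) y"
    unfolding sums_def part .
  then show ?thesis unfolding av l2inner_def[of x s] by (simp add: sums_unique)
qed

lemma adjop_bop: assumes T: "bop T" shows "bop (adjop T)"
proof -
  obtain C where C: "C \<ge> 0" "\<forall>x\<in>l2. l2norm (T x) \<le> C * l2norm x" using bop_bound[OF T] by blast
  have TP: "T (Pk n) \<in> l2" for n using bop_l2[OF T Pk_l2] .
  show ?thesis unfolding bop_def
  proof (intro conjI ballI allI impI)
    show "adjop T x \<in> l2" if "x \<in> l2" for x using adjop_bound[OF T C that] by simp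
    show "adjop T x = (\<lambda>_. 0)" if "x \<notin> l2" for x using that by (simp add: adjop_def)
    show "adjop T (\<lambda>n. x n + y n) = (\<lambda>n. adjop T x n + adjop T y n)" if "x \<in> l2" "y \<in> l2" for x y
      using that l2_add(1)[OF that] inner_add_right[OF TP that] by (simp add: adjop_def)
    show "adjop T (\<lambda>n. c * x n) = (\<lambda>n. c * adjop T x n)" if "x \<in> l2" for x c
      using that l2_scale(1)[OF that] inner_scale_right[OF TP that] by (simp add: adjop_def)
    show "\<exists>C. \<forall>x\<in>l2. l2norm (adjop T x) \<le> C * l2norm x"
      using adjop_bound(2)[OF T C] by blast
  qed
qed

lemma adj_eq: assumes T: "bop T" shows "adj T = adjop T"
  unfolding adj_def
proof (rule the_equality)
  show "bop (adjop T) \<and> (\<forall>x\<in>l2. \<forall>y\<in>l2. l2inner (T x) y = l2inner x (adjop T y))"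
    using adjop_bop[OF T] adjop_rel[OF T] by blast
  fix S assume S: "bop S \<and> (\<forall>x\<in>l2. \<forall>y\<in>l2. l2inner (T x) y = l2inner x (S y))"
  show "S = adjop T"
  proof (rule ext)
    fix y show "S y = adjop T y"
    proof (cases "y \<in> l2")
      case True
      show ?thesis
      proof (rule ext)
        fix n
        have "S y n = l2inner (Pk n) (S y)" by (simp add: inner_Pk)
        also have "\<dots> = l2inner (T (Pk n)) y" using S Pk_l2 True by simp
        finally show "S y n = adjop T y n" using True by (simp add: adjop_def)
      qed
    next
      case False
      then show ?thesis using S bop_out[of S y] by (simp add: adjop_def)
    qed
  qed
qed

lemma adj_bop: "bop T \<Longrightarrow> bop (adj T)"
  using adj_eq adjop_bop by simp

lemma adj_rel: "bop T \<Longrightarrow> x \<in> l2 \<Longrightarrow> y \<in> l2 \<Longrightarrow> l2inner (T x) y = l2inner x (adj T y)"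
  using adj_eq adjop_rel by simp

lemma adj_rel2: "bop T \<Longrightarrow> x \<in> l2 \<Longrightarrow> y \<in> l2 \<Longrightarrow> l2inner (adj T x) y = l2inner x (T y)"
proof -
  assume a: "bop T" "x \<in> l2" "y \<in> l2"
  have "l2inner (adj T x) y = cnj (l2inner y (adj T x))"
    using inner_cnj[OF a(3) bop_l2[OF adj_bop[OF a(1)] a(2)]] .
  also have "\<dots> = cnj (l2inner (T y) x)" using adj_rel[OF a(1,3,2)] by simp
  also have "\<dots> = l2inner x (T y)" using inner_cnj[OF bop_l2[OF a(1,3)] a(2)] by simp
  finally show ?thesis .
qed

lemma inner_sum_right: "finite I \<Longrightarrow> (\<forall>i\<in>I. v i \<in> l2) \<Longrightarrow> y \<in> l2 \<Longrightarrow>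
  l2inner y (\<lambda>m. \<Sum>i\<in>I. c i * v i m) = (\<Sum>i\<in>I. c i * l2inner y (v i))"
proof -
  assume a: "finite I" "\<forall>i\<in>I. v i \<in> l2" "y \<in> l2"
  have "l2inner y (\<lambda>m. \<Sum>i\<in>I. c i * v i m) = cnj (l2inner (\<lambda>m. \<Sum>i\<in>I. c i * v i m) y)"
    using inner_cnj[OF l2_sum[OF a(1,2)] a(3)] .
  also have "\<dots> = cnj (\<Sum>i\<in>I. cnj (c i) * l2inner (v i) y)" using inner_sum_left[OF a] by simp
  also have "\<dots> = (\<Sum>i\<in>I. c i * l2inner y (v i))"
    using a(2,3) by (simp add: inner_cnj[OF a(3)])
  finally show ?thesis .
qed

lemma l2norm_sum_le: "finite I \<Longrightarrow> (\<forall>i\<in>I. v i \<in> l2) \<Longrightarrow>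
  l2norm (\<lambda>m. \<Sum>i\<in>I. c i * v i m) \<le> (\<Sum>i\<in>I. cmod (c i) * l2norm (v i))"
proof (induction I rule: finite_induct)
  case empty then show ?case using l2_zero by simp
next
  case (insert j I)
  have e: "(\<lambda>m. \<Sum>i\<in>insert j I. c i * v i m) = (\<lambda>m. c j * v j m + (\<Sum>i\<in>I. c i * v i m))"
    using insert(1,2) by simp
  have vj: "v j \<in> l2" and vI: "\<forall>i\<in>I. v i \<in> l2" using insert(4) by auto
  have "l2norm (\<lambda>m. c j * v j m + (\<Sum>i\<in>I. c i * v i m)) \<le> l2norm (\<lambda>m. c j * v j m) + l2norm (\<lambda>m. \<Sum>i\<in>I. c i * v i m)"
    by (rule l2_add(2)[OF l2_scale(1)[OF vj] l2_sum[OF insert(1) vI]])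
  also have "\<dots> \<le> cmod (c j) * l2norm (v j) + (\<Sum>i\<in>I. cmod (c i) * l2norm (v i))"
    using l2_scale(2)[OF vj] insert(3)[OF vI] by simp
  finally show ?case unfolding e using insert(1,2) by simp
qed

definition orthonormal :: "vec set \<Rightarrow> bool" where
  "orthonormal E \<longleftrightarrow> (\<forall>e\<in>E. l2inner e e = 1) \<and> (\<forall>e\<in>E. \<forall>e'\<in>E. e \<noteq> e' \<longrightarrow> l2inner e e' = 0)"

lemma cspan_add: "x \<in> cspan E \<Longrightarrow> y \<in> cspan E \<Longrightarrow> (\<lambda>n. x n + y n) \<in> cspan E"
proof -
  assume "x \<in> cspan E" "y \<in> cspan E"
  then obtain c d where "x = (\<lambda>n. \<Sum>v\<in>E. c v * v n)" "y = (\<lambda>n. \<Sum>v\<in>E. d v * v n)"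
    by (auto simp: cspan_def)
  then have "(\<lambda>n. x n + y n) = (\<lambda>n. \<Sum>v\<in>E. (c v + d v) * v n)"
    by (simp add: sum.distrib distrib_right)
  then show ?thesis by (auto simp: cspan_def)
qed

lemma cspan_scale: "x \<in> cspan E \<Longrightarrow> (\<lambda>n. a * x n) \<in> cspan E"
proof -
  assume "x \<in> cspan E"
  then obtain c where "x = (\<lambda>n. \<Sum>v\<in>E. c v * v n)" by (auto simp: cspan_def)
  then have "(\<lambda>n. a * x n) = (\<lambda>n. \<Sum>v\<in>E. (a * c v) * v n)"
    by (simp add: sum_distrib_left mult.assoc)
  then show ?thesis by (auto simp: cspan_def)
qed

lemma cspan_zero: "(\<lambda>_. 0) \<in> cspan E"
  unfolding cspan_def by (rule CollectI, rule exI[of _ "\<lambda>_. 0"]) simp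

lemma cspan_sum: "finite I \<Longrightarrow> (\<forall>i\<in>I. v i \<in> cspan E) \<Longrightarrow> (\<lambda>m. \<Sum>i\<in>I. c i * v i m) \<in> cspan E"
proof (induction I rule: finite_induct)
  case empty then show ?case using cspan_zero by simp
next
  case (insert j I)
  have e: "(\<lambda>m. \<Sum>i\<in>insert j I. c i * v i m) = (\<lambda>m. c j * v j m + (\<Sum>i\<in>I. c i * v i m))"
    using insert(1,2) by simp
  show ?case unfolding e using insert by (intro cspan_add cspan_scale) auto
qed

lemma cspan_mono_sub: "finite G \<Longrightarrow> G \<subseteq> cspan E \<Longrightarrow> cspan G \<subseteq> cspan E"
proof
  fix x assume G: "finite G" "G \<subseteq> cspan E" and x: "x \<in> cspan G"
  then obtain c where "x = (\<lambda>n. \<Sum>v\<in>G. c v * v n)" by (auto simp: cspan_def)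
  then show "x \<in> cspan E" using cspan_sum[OF G(1), of "\<lambda>v. v" E c] G(2) by auto
qed

lemma cspan_elem: "finite E \<Longrightarrow> e \<in> E \<Longrightarrow> e \<in> cspan E"
proof -
  assume E: "finite E" "e \<in> E"
  have "(\<lambda>n. \<Sum>v\<in>E. (if v = e then 1 else 0) * v n) = e"
  proof (rule ext)
    fix n
    have "(\<Sum>v\<in>E. (if v = e then 1 else 0) * v n) = (\<Sum>v\<in>E. if v = e then e n else 0)"
      by (intro sum.cong) auto
    also have "\<dots> = e n" using E by (simp add: sum.delta)
    finally show "(\<Sum>v\<in>E. (if v = e then 1 else 0) * v n) = e n" .
  qed
  then show ?thesis unfolding cspan_def by (intro CollectI exI[of _ "\<lambda>v. if v = e then 1 else 0"]) simp
qed

lemma cspan_l2: "finite E \<Longrightarrow> E \<subseteq> l2 \<Longrightarrow> cspan E \<subseteq> l2"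
proof
  fix x assume E: "finite E" "E \<subseteq> l2" and "x \<in> cspan E"
  then obtain c where "x = (\<lambda>n. \<Sum>v\<in>E. c v * v n)" by (auto simp: cspan_def)
  then show "x \<in> l2" using l2_sum[OF E(1), of "\<lambda>v. v" c] E(2) by auto
qed

lemma orthonormal_coeff:
  assumes E: "finite E" "E \<subseteq> l2" "orthonormal E" and e: "e \<in> E"
  shows "l2inner e (\<lambda>n. \<Sum>v\<in>E. c v * v n) = c e"
proof -
  have "l2inner e (\<lambda>n. \<Sum>v\<in>E. c v * v n) = (\<Sum>v\<in>E. c v * l2inner e v)"
    by (rule inner_sum_right) (use E e in auto)
  also have "\<dots> = (\<Sum>v\<in>E. if v = e then c v else 0)"
    by (intro sum.cong refl) (use E(3) e in \<open>auto simp: orthonormal_def\<close>)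
  also have "\<dots> = c e" using E(1) e by (simp add: sum.delta')
  finally show ?thesis .
qed

lemma orthonormal_expand:
  assumes E: "finite E" "E \<subseteq> l2" "orthonormal E" and w: "w \<in> cspan E"
  shows "w = (\<lambda>n. \<Sum>v\<in>E. l2inner v w * v n)"
proof -
  obtain c where c: "w = (\<lambda>n. \<Sum>v\<in>E. c v * v n)" using w by (auto simp: cspan_def)
  have "\<forall>v\<in>E. l2inner v w = c v" unfolding c using orthonormal_coeff[OF E] by blast
  then show ?thesis unfolding c by (intro ext sum.cong) auto
qed

lemma gram_schmidt:
  "finite G \<Longrightarrow> G \<subseteq> l2 \<Longrightarrow> \<exists>E. finite E \<and> E \<subseteq> l2 \<and> orthonormal E \<and> G \<subseteq> cspan E"
proof (induction G rule: finite_induct)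
  case empty
  show ?case by (rule exI[of _ "{}"]) (simp add: orthonormal_def)
next
  case (insert g G)
  obtain E where E: "finite E" "E \<subseteq> l2" "orthonormal E" "G \<subseteq> cspan E" using insert by auto
  have g: "g \<in> l2" using insert(4) by simp
  define p where "p = (\<lambda>n. \<Sum>v\<in>E. l2inner v g * v n)"
  define w where "w = (\<lambda>n. g n - p n)"
  have p: "p \<in> l2" unfolding p_def using l2_sum[OF E(1), of "\<lambda>v. v" "\<lambda>v. l2inner v g"] E(2) by auto
  have pE: "p \<in> cspan E" unfolding p_def cspan_def by auto
  have w: "w \<in> l2" unfolding w_def by (rule l2_sub(1)[OF g p])
  have worth: "l2inner e w = 0" if e: "e \<in> E" for e
  proof -
    have "l2inner e w = l2inner e g - l2inner e p"
      unfolding w_def by (rule inner_sub_right[OF g p]) (use e E in auto)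
    also have "l2inner e p = l2inner e g" unfolding p_def by (rule orthonormal_coeff[OF E(1-3) e])
    finally show ?thesis by simp
  qed
  show ?case
  proof (cases "w = (\<lambda>_. 0)")
    case True
    then have "g = p" unfolding w_def by (simp add: fun_eq_iff)
    then show ?thesis using E pE by (intro exI[of _ E]) auto
  next
    case False
    define r where "r = l2norm w"
    have r: "r > 0" using l2norm_nonneg[OF w] l2norm_zero_iff[OF w] False unfolding r_def by auto
    define u where "u = (\<lambda>n. complex_of_real (1 / r) * w n)"
    have u: "u \<in> l2" unfolding u_def by (rule l2_scale(1)[OF w])
    have uu: "l2inner u u = 1"
    proof -
      have "l2norm u = cmod (complex_of_real (1 / r)) * l2norm w" unfolding u_def by (rule l2_scale(2)[OF w])
      also have "\<dots> = 1" using r unfolding r_def by (simp add: norm_divide)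
      finally have "l2norm u = 1" .
      then show ?thesis using inner_self[OF u] by simp
    qed
    have eu: "l2inner e u = 0" if "e \<in> E" for e
    proof -
      have "l2inner e u = complex_of_real (1 / r) * l2inner e w"
        unfolding u_def by (rule inner_scale_right[OF _ w]) (use E(2) that in auto)
      then show ?thesis using worth[OF that] by simp
    qed
    have ue: "l2inner u e = 0" if "e \<in> E" for e
      using eu[OF that] inner_cnj[of e u] E(2) that u by auto
    have uE: "u \<notin> E" using eu uu by force
    have on: "orthonormal (insert u E)"
      using E(3) uu eu ue unfolding orthonormal_def by auto
    have sub: "cspan E \<subseteq> cspan (insert u E)"
      by (rule cspan_mono_sub[OF E(1)]) (use cspan_elem[of "insert u E"] E(1) in auto)
    have gw: "g = (\<lambda>n. complex_of_real r * u n + p n)"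
      using r unfolding u_def w_def by (simp add: fun_eq_iff)
    have "g \<in> cspan (insert u E)" unfolding gw
      by (intro cspan_add cspan_scale) (use cspan_elem[of "insert u E" u] E(1) sub pE in auto)
    then show ?thesis using E on sub u
      by (intro exI[of _ "insert u E"]) auto
  qed
qed

definition wnull :: "(nat \<Rightarrow> vec) \<Rightarrow> bool" where
  "wnull y \<longleftrightarrow> (\<forall>k. y k \<in> l2) \<and> (\<forall>z\<in>l2. (\<lambda>k. l2inner z (y k)) \<longlonglongrightarrow> 0)"

lemma finite_rank_weak:
  assumes F: "bop F" "finite_rank F" and y: "wnull y"
  shows "(\<lambda>k. l2norm (F (y k))) \<longlonglongrightarrow> 0"
proof -
  obtain G where G: "finite G" "G \<subseteq> l2" "F ` l2 \<subseteq> cspan G" using F(2) by (auto simp: finite_rank_def)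
  obtain E where E: "finite E" "E \<subseteq> l2" "orthonormal E" "G \<subseteq> cspan E" using gram_schmidt[OF G(1,2)] by blast
  have yl: "y k \<in> l2" for k using y by (simp add: wnull_def)
  have inE: "F (y k) \<in> cspan E" for k using G(3) cspan_mono_sub[OF G(1) E(4)] yl by auto
  have en: "l2norm v = 1" if "v \<in> E" for v
  proof -
    have "complex_of_real ((l2norm v)\<^sup>2) = 1" using inner_self[of v] E(2,3) that by (auto simp: orthonormal_def)
    then have "(l2norm v)\<^sup>2 = 1" by (metis of_real_eq_1_iff)
    moreover have "l2norm v \<ge> 0" using l2norm_nonneg[of v] E(2) that by auto
    ultimately show ?thesis by (simp add: power2_eq_1_iff)
  qed
  have bnd: "l2norm (F (y k)) \<le> (\<Sum>v\<in>E. cmod (l2inner (adj F v) (y k)))" for k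
  proof -
    have "l2norm (F (y k)) = l2norm (\<lambda>n. \<Sum>v\<in>E. l2inner v (F (y k)) * v n)"
      using orthonormal_expand[OF E(1-3) inE[of k]] by simp
    also have "\<dots> \<le> (\<Sum>v\<in>E. cmod (l2inner v (F (y k))) * l2norm v)"
      by (rule l2norm_sum_le) (use E in auto)
    also have "\<dots> = (\<Sum>v\<in>E. cmod (l2inner (adj F v) (y k)))"
      by (intro sum.cong refl) (use en adj_rel2[OF F(1) _ yl] E(2) in auto)
    finally show ?thesis .
  qed
  have "(\<lambda>k. \<Sum>v\<in>E. cmod (l2inner (adj F v) (y k))) \<longlonglongrightarrow> (\<Sum>v\<in>E. 0)"
  proof (rule tendsto_sum)
    fix v assume v: "v \<in> E"
    have "adj F v \<in> l2" using bop_l2[OF adj_bop[OF F(1)]] E(2) v by auto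
    then have "(\<lambda>k. l2inner (adj F v) (y k)) \<longlonglongrightarrow> 0" using y by (simp add: wnull_def)
    then show "(\<lambda>k. cmod (l2inner (adj F v) (y k))) \<longlonglongrightarrow> 0" using tendsto_norm_zero by blast
  qed
  then have "(\<lambda>k. \<Sum>v\<in>E. cmod (l2inner (adj F v) (y k))) \<longlonglongrightarrow> 0" by simp
  then show ?thesis
    by (rule null_cmp) (use bnd l2norm_nonneg[OF bop_l2[OF F(1) yl]] in auto)
qed

lemma compact_weak:
  assumes T: "bop T" "compact_op T" and y: "wnull y" and M: "\<forall>k. l2norm (y k) \<le> M"
  shows "(\<lambda>k. l2norm (T (y k))) \<longlonglongrightarrow> 0"
proof (rule tendstoI)
  fix e :: real assume e: "e > 0"
  have yl: "y k \<in> l2" for k using y by (simp add: wnull_def)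
  have M0: "M \<ge> 0" using M l2norm_nonneg[OF yl] order_trans by blast
  define d where "d = e / (2 * (M + 1))"
  have d: "d > 0" unfolding d_def using e M0 by simp
  obtain F where F: "bop F" "finite_rank F" "\<forall>x\<in>l2. l2norm (T x - F x) \<le> d * l2norm x"
    using T(2) d unfolding compact_op_def by blast
  have ev: "eventually (\<lambda>k. l2norm (F (y k)) < e / 2) sequentially"
  proof -
    have "eventually (\<lambda>k. dist (l2norm (F (y k))) 0 < e / 2) sequentially"
      using finite_rank_weak[OF F(1,2) y] e by (intro tendstoD) auto
    then show ?thesis by eventually_elim (simp add: dist_real_def)
  qed
  show "eventually (\<lambda>k. dist (l2norm (T (y k))) 0 < e) sequentially"
    using ev
  proof eventually_elim
    case (elim k)
    have Ty: "T (y k) \<in> l2" "F (y k) \<in> l2" using bop_l2 T F yl by auto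
    have dm: "(\<lambda>n. T (y k) n - F (y k) n) \<in> l2" by (rule l2_sub(1)[OF Ty])
    have "T (y k) = (\<lambda>n. (T (y k) n - F (y k) n) + F (y k) n)" by simp
    then have "l2norm (T (y k)) \<le> l2norm (\<lambda>n. T (y k) n - F (y k) n) + l2norm (F (y k))"
      using l2_add(2)[OF dm Ty(2)] by simp
    also have "l2norm (\<lambda>n. T (y k) n - F (y k) n) \<le> d * l2norm (y k)"
      using F(3) yl by (simp add: fun_diff_def)
    also have "d * l2norm (y k) \<le> d * (M + 1)" using M d by (intro mult_left_mono) (auto intro: order_trans)
    also have "d * (M + 1) = e / 2" unfolding d_def using M0 by (simp add: field_simps)
    finally have "l2norm (T (y k)) < e" using elim by simp
    then show ?case using l2norm_nonneg[OF Ty(1)] by simp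
  qed
qed

lemma wnull_bop:
  assumes B: "bop B" and y: "wnull y"
  shows "wnull (\<lambda>k. B (y k))"
  unfolding wnull_def
proof (intro conjI allI ballI)
  have yl: "y k \<in> l2" for k using y by (simp add: wnull_def)
  show "B (y k) \<in> l2" for k using bop_l2[OF B yl] .
  fix z assume z: "z \<in> l2"
  have "l2inner z (B (y k)) = l2inner (adj B z) (y k)" for k using adj_rel2[OF B z yl] by simp
  moreover have "(\<lambda>k. l2inner (adj B z) (y k)) \<longlonglongrightarrow> 0"
    using y bop_l2[OF adj_bop[OF B] z] by (simp add: wnull_def)
  ultimately show "(\<lambda>k. l2inner z (B (y k))) \<longlonglongrightarrow> 0" by simp
qed

definition chi :: "nat set \<Rightarrow> vec" where
  "chi A = (\<lambda>n. if n \<in> A then 1 else 0)"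

lemma Pk_chi: "Pk k = chi {k}"
  by (simp add: Pk_def chi_def fun_eq_iff)

lemma chi_linf: "chi A \<in> linf"
  unfolding linf_def chi_def by (rule CollectI, rule exI[of _ 1]) simp

lemma chi_c0: "finite A \<Longrightarrow> chi A \<in> c0"
proof -
  assume A: "finite A"
  have "eventually (\<lambda>n. chi A n = 0) sequentially"
  proof -
    obtain N where "\<forall>n\<in>A. n < N" using A finite_nat_set_iff_bounded by auto
    then show ?thesis unfolding eventually_sequentially chi_def
      by (intro exI[of _ N]) auto
  qed
  then have "chi A \<longlonglongrightarrow> 0" by (rule tendsto_eventually)
  then show ?thesis by (simp add: c0_def)
qed

lemma chi_mult: "(\<lambda>n. chi A n * chi B n) = chi (A \<inter> B)"
  by (simp add: chi_def fun_eq_iff)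

lemma chi_add: "A \<inter> B = {} \<Longrightarrow> (\<lambda>n. chi A n + chi B n) = chi (A \<union> B)"
  by (auto simp: chi_def fun_eq_iff)

lemma chi_cnj: "(\<lambda>n. cnj (chi A n)) = chi A"
  by (simp add: chi_def fun_eq_iff)

lemma chi_UNIV: "chi UNIV = (\<lambda>_. 1)"
  by (simp add: chi_def)

locale ush =
  fixes \<Phi> :: "vec \<Rightarrow> op"
  assumes H: "unital_star_hom \<Phi>"
begin

lemma bopP: "bop (\<Phi> (chi A))"
  using H chi_linf by (simp add: unital_star_hom_def)

lemma multP: "\<Phi> (chi A) (\<Phi> (chi B) z) = \<Phi> (chi (A \<inter> B)) z"
proof -
  have "\<Phi> (\<lambda>n. chi A n * chi B n) = \<Phi> (chi A) \<circ> \<Phi> (chi B)"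
    using H chi_linf by (simp add: unital_star_hom_def)
  then show ?thesis unfolding chi_mult by simp
qed

lemma addP: "A \<inter> B = {} \<Longrightarrow> \<Phi> (chi (A \<union> B)) z = (\<lambda>n. \<Phi> (chi A) z n + \<Phi> (chi B) z n)"
proof -
  assume d: "A \<inter> B = {}"
  have "\<Phi> (\<lambda>n. chi A n + chi B n) = (\<lambda>x n. \<Phi> (chi A) x n + \<Phi> (chi B) x n)"
    using H chi_linf by (simp add: unital_star_hom_def)
  then show ?thesis unfolding chi_add[OF d] by simp
qed

lemma adjP: "adj (\<Phi> (chi A)) = \<Phi> (chi A)"
proof -
  have "\<Phi> (\<lambda>n. cnj (chi A n)) = adj (\<Phi> (chi A))"
    using H chi_linf by (simp add: unital_star_hom_def)
  then show ?thesis unfolding chi_cnj by simp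
qed

lemma selfadjP: "x \<in> l2 \<Longrightarrow> y \<in> l2 \<Longrightarrow> l2inner (\<Phi> (chi A) x) y = l2inner x (\<Phi> (chi A) y)"
  using adj_rel[OF bopP, of x y A] adjP by simp

lemma unitP: "\<Phi> (chi UNIV) = ident"
  using H by (simp add: unital_star_hom_def chi_UNIV)

lemma emptyP: "\<Phi> (chi {}) z = (\<lambda>_. 0)"
proof -
  have sc: "\<forall>a\<in>linf. \<forall>c. \<Phi> (\<lambda>n. c * a n) = (\<lambda>x n. c * \<Phi> a x n)"
    using H by (simp add: unital_star_hom_def)
  have f: "\<Phi> (\<lambda>n. 0 * chi {} n) = (\<lambda>x n. 0 * \<Phi> (chi {}) x n)"
    using bspec[OF sc chi_linf[of "{}"], THEN spec[of _ 0]] .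
  have c: "(\<lambda>n. 0 * chi {} n) = chi {}" by (simp add: chi_def)
  from f have "\<Phi> (chi {}) = (\<lambda>x n. 0)" unfolding c by simp
  then show ?thesis by simp
qed

lemma l2P: "z \<in> l2 \<Longrightarrow> \<Phi> (chi A) z \<in> l2"
  by (rule bop_l2[OF bopP])

lemma idemP: "\<Phi> (chi A) (\<Phi> (chi A) z) = \<Phi> (chi A) z"
  using multP[of A A z] by simp

lemma contrP: assumes z: "z \<in> l2" shows "l2norm (\<Phi> (chi A) z) \<le> l2norm z"
proof -
  let ?p = "\<Phi> (chi A) z"
  have p: "?p \<in> l2" using l2P[OF z] .
  have "complex_of_real ((l2norm ?p)\<^sup>2) = l2inner ?p ?p" using inner_self[OF p] by simp
  also have "\<dots> = l2inner z (\<Phi> (chi A) ?p)" using selfadjP[OF z p] .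
  also have "\<dots> = l2inner z ?p" using idemP by simp
  finally have "(l2norm ?p)\<^sup>2 = cmod (l2inner z ?p)"
    by (metis norm_of_real abs_of_nonneg zero_le_power2)
  also have "\<dots> \<le> l2norm z * l2norm ?p" by (rule cauchy_schwarz[OF z p])
  finally have "l2norm ?p * l2norm ?p \<le> l2norm z * l2norm ?p" by (simp add: power2_eq_square)
  then show ?thesis using l2norm_nonneg[OF p] l2norm_nonneg[OF z]
    by (metis mult_right_le_imp_le order_le_less mult_zero_right)
qed

lemma monoP: assumes z: "z \<in> l2" and AB: "A \<subseteq> B"
  shows "l2norm (\<Phi> (chi A) z) \<le> l2norm (\<Phi> (chi B) z)"
proof -
  have "\<Phi> (chi A) z = \<Phi> (chi A) (\<Phi> (chi B) z)" using multP[of A B z] AB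
    by (simp add: Int_absorb2)
  then show ?thesis using contrP[OF l2P[OF z]] by simp
qed

lemma complP: assumes z: "z \<in> l2" shows "\<Phi> (chi (- A)) z = (\<lambda>n. z n - \<Phi> (chi A) z n)"
proof -
  have "\<Phi> (chi (A \<union> - A)) z = (\<lambda>n. \<Phi> (chi A) z n + \<Phi> (chi (- A)) z n)"
    by (rule addP) auto
  moreover have "\<Phi> (chi (A \<union> - A)) z = z" using unitP z by (simp add: ident_def)
  ultimately have "z = (\<lambda>n. \<Phi> (chi A) z n + \<Phi> (chi (- A)) z n)" by simp
  then show ?thesis by (simp add: fun_eq_iff algebra_simps)
qed

end

lemma diag_chi: "x \<in> l2 \<Longrightarrow> diag (chi {..<N}) x = trunc N x"
  by (simp add: diag_def chi_def trunc_def fun_eq_iff)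

lemma diag_one: "x \<in> l2 \<Longrightarrow> diag (\<lambda>_. 1) x = x"
  by (simp add: diag_def)

locale usc = ush +
  assumes SC: "strongly_continuous \<Phi>"
begin

lemma strongP: assumes z: "z \<in> l2"
  shows "(\<lambda>N. l2norm (\<lambda>n. \<Phi> (chi {..<N}) z n - z n)) \<longlonglongrightarrow> 0"
proof -
  define F where "F = filtermap (\<lambda>N. chi {..<N}) sequentially"
  have one: "(\<lambda>_. 1) \<in> linf" using chi_linf[of UNIV] by (simp add: chi_UNIV)
  have Fle: "F \<le> principal linf" unfolding F_def le_principal eventually_filtermap
    using chi_linf by simp
  have hyp: "\<forall>x\<in>l2. ((\<lambda>a. l2norm (\<lambda>n. diag a x n - diag (\<lambda>_. 1) x n)) \<longlongrightarrow> 0) F"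
  proof
    fix x assume x: "x \<in> l2"
    have "((\<lambda>N. l2norm (\<lambda>n. diag (chi {..<N}) x n - diag (\<lambda>_. 1) x n)) \<longlongrightarrow> 0) sequentially"
      using tail_tendsto[OF x] l2norm_sub_commute
      by (simp add: diag_chi[OF x] diag_one[OF x])
    then show "((\<lambda>a. l2norm (\<lambda>n. diag a x n - diag (\<lambda>_. 1) x n)) \<longlongrightarrow> 0) F"
      unfolding F_def tendsto_compose_filtermap[symmetric] by (simp add: o_def)
  qed
  have "((\<lambda>a. l2norm (\<lambda>n. \<Phi> a z n - \<Phi> (\<lambda>_. 1) z n)) \<longlongrightarrow> 0) F"
    using SC one Fle hyp z unfolding strongly_continuous_def by blast
  then have "((\<lambda>N. l2norm (\<lambda>n. \<Phi> (chi {..<N}) z n - \<Phi> (\<lambda>_. 1) z n)) \<longlongrightarrow> 0) sequentially"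
    unfolding F_def tendsto_compose_filtermap[symmetric] by (simp add: o_def)
  moreover have "\<Phi> (\<lambda>_. 1) z = z" using unitP z by (simp add: chi_UNIV ident_def)
  ultimately show ?thesis by simp
qed

lemma tailP: assumes z: "z \<in> l2"
  shows "(\<lambda>N. l2norm (\<Phi> (chi {N..}) z)) \<longlonglongrightarrow> 0"
proof -
  have "\<Phi> (chi {N..}) z = (\<lambda>n. z n - \<Phi> (chi {..<N}) z n)" for N
    using complP[OF z, of "{..<N}"] by (simp add: Compl_lessThan)
  then show ?thesis using strongP[OF z] l2norm_sub_commute by simp
qed

lemma pkP: assumes z: "z \<in> l2"
  shows "(\<lambda>k. l2norm (\<Phi> (chi {k}) z)) \<longlonglongrightarrow> 0"
proof -
  have l: "\<Phi> (chi {..<k}) z \<in> l2" "\<Phi> (chi {..<Suc k}) z \<in> l2" for k using l2P[OF z] by auto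
  have e: "\<Phi> (chi {k}) z = (\<lambda>n. (\<Phi> (chi {..<Suc k}) z n - z n) - (\<Phi> (chi {..<k}) z n - z n))" for k
  proof -
    have "\<Phi> (chi ({..<k} \<union> {k})) z = (\<lambda>n. \<Phi> (chi {..<k}) z n + \<Phi> (chi {k}) z n)"
      by (rule addP) auto
    moreover have "{..<k} \<union> {k} = {..<Suc k}" by auto
    ultimately show ?thesis by (simp add: fun_eq_iff)
  qed
  have b: "l2norm (\<Phi> (chi {k}) z) \<le> l2norm (\<lambda>n. \<Phi> (chi {..<Suc k}) z n - z n) + l2norm (\<lambda>n. \<Phi> (chi {..<k}) z n - z n)" for k
    unfolding e by (rule l2_sub(2)) (use l2_sub(1)[OF l(1) z] l2_sub(1)[OF l(2) z] in auto)
  have "(\<lambda>k. l2norm (\<lambda>n. \<Phi> (chi {..<Suc k}) z n - z n) + l2norm (\<lambda>n. \<Phi> (chi {..<k}) z n - z n)) \<longlonglongrightarrow> 0 + 0"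
    by (intro tendsto_add strongP[OF z] LIMSEQ_Suc[of "\<lambda>N. l2norm (\<lambda>n. \<Phi> (chi {..<N}) z n - z n)"])
  then have g0: "(\<lambda>k. l2norm (\<lambda>n. \<Phi> (chi {..<Suc k}) z n - z n) + l2norm (\<lambda>n. \<Phi> (chi {..<k}) z n - z n)) \<longlonglongrightarrow> 0"
    by simp
  show ?thesis
  proof (rule null_cmp[OF g0], intro always_eventually allI)
    fix k
    have "0 \<le> l2norm (\<Phi> (chi {k}) z)" by (rule l2norm_nonneg[OF l2P[OF z]])
    then show "norm (l2norm (\<Phi> (chi {k}) z)) \<le> l2norm (\<lambda>n. \<Phi> (chi {..<Suc k}) z n - z n) + l2norm (\<lambda>n. \<Phi> (chi {..<k}) z n - z n)"
      using b[of k] by simp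
  qed
qed

end

lemma sum_app: "(\<Sum>i\<in>I. f i) x = (\<Sum>i\<in>I. f i x)"
  by (induction I rule: infinite_finite_induct) auto

interpretation V: vector_space "\<lambda>(c::complex) (x::vec). (\<lambda>n. c * x n)"
  by unfold_locales (simp_all add: fun_eq_iff algebra_simps)

lemma cspan_eq: "finite S \<Longrightarrow> cspan S = V.span S"
proof -
  assume S: "finite S"
  have "(\<Sum>v\<in>S. (\<lambda>n. u v * v n)) = (\<lambda>n. \<Sum>v\<in>S. u v * v n)" for u
    by (rule ext) (simp add: sum_app)
  then show ?thesis unfolding V.span_finite[OF S] cspan_def by auto
qed

definition lsub :: "vec set \<Rightarrow> bool" where
  "lsub V \<longleftrightarrow> V \<subseteq> l2 \<and> (\<lambda>_. 0) \<in> V \<and> (\<forall>x\<in>V. \<forall>y\<in>V. (\<lambda>n. x n + y n) \<in> V) \<and> (\<forall>x\<in>V. \<forall>c. (\<lambda>n. c * x n) \<in> V)"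

lemma lsub_subspace: "lsub V \<Longrightarrow> V.subspace V"
  unfolding lsub_def V.subspace_def by (simp add: zero_fun_def plus_fun_def)

lemma lsub_range: "bop T \<Longrightarrow> lsub (T ` l2)"
  unfolding lsub_def
proof (intro conjI ballI allI)
  assume T: "bop T"
  show "T ` l2 \<subseteq> l2" using bop_l2[OF T] by auto
  show "(\<lambda>_. 0) \<in> T ` l2" using bop_zero[OF T] l2_zero(1) by (metis image_eqI)
  fix x y assume "x \<in> T ` l2" "y \<in> T ` l2"
  then obtain a b where ab: "a \<in> l2" "b \<in> l2" "x = T a" "y = T b" by auto
  show "(\<lambda>n. x n + y n) \<in> T ` l2"
    using bop_add[OF T ab(1,2)] l2_add(1)[OF ab(1,2)] ab(3,4) by (metis image_eqI)
next
  fix x c assume T: "bop T" and "x \<in> T ` l2"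
  then obtain a where a: "a \<in> l2" "x = T a" by auto
  show "(\<lambda>n. c * x n) \<in> T ` l2"
    using bop_scale[OF T a(1)] l2_scale(1)[OF a(1)] a(2) by (metis image_eqI)
qed

lemma bop_comp: assumes A: "bop A" and B: "bop B" shows "bop (A \<circ> B)"
proof -
  obtain CA where CA: "CA \<ge> 0" "\<forall>x\<in>l2. l2norm (A x) \<le> CA * l2norm x" using bop_bound[OF A] by blast
  obtain CB where CB: "CB \<ge> 0" "\<forall>x\<in>l2. l2norm (B x) \<le> CB * l2norm x" using bop_bound[OF B] by blast
  show ?thesis unfolding bop_def
  proof (intro conjI ballI allI impI)
    fix x assume x: "x \<in> l2"
    show "(A \<circ> B) x \<in> l2" using bop_l2[OF A bop_l2[OF B x]] by simp
    fix c show "(A \<circ> B) (\<lambda>n. c * x n) = (\<lambda>n. c * (A \<circ> B) x n)"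
      using bop_scale[OF B x] bop_scale[OF A bop_l2[OF B x]] by simp
  next
    fix x assume "x \<notin> l2" then show "(A \<circ> B) x = (\<lambda>_. 0)" using bop_out[OF B] bop_zero[OF A] by simp
  next
    fix x y assume x: "x \<in> l2" and y: "y \<in> l2"
    show "(A \<circ> B) (\<lambda>n. x n + y n) = (\<lambda>n. (A \<circ> B) x n + (A \<circ> B) y n)"
      using bop_add[OF B x y] bop_add[OF A bop_l2[OF B x] bop_l2[OF B y]] by simp
  next
    have "\<forall>x\<in>l2. l2norm ((A \<circ> B) x) \<le> (CA * CB) * l2norm x"
    proof
      fix x assume x: "x \<in> l2"
      have "l2norm (A (B x)) \<le> CA * l2norm (B x)" using CA bop_l2[OF B x] by auto
      also have "\<dots> \<le> CA * (CB * l2norm x)" using CB x CA(1) by (intro mult_left_mono) auto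
      finally show "l2norm ((A \<circ> B) x) \<le> (CA * CB) * l2norm x" by (simp add: mult.assoc)
    qed
    then show "\<exists>C. \<forall>x\<in>l2. l2norm ((A \<circ> B) x) \<le> C * l2norm x" by blast
  qed
qed

lemma inj_dim:
  assumes V: "lsub V" and L: "bop L" and G: "finite G" and img: "\<forall>x\<in>V. L x \<in> cspan G"
    and inj: "\<forall>x\<in>V. L x = (\<lambda>_. 0) \<longrightarrow> x = (\<lambda>_. 0)"
  shows "\<exists>B. finite B \<and> B \<subseteq> V \<and> card B \<le> card G \<and> V \<subseteq> cspan B"
proof -
  have sV: "V.subspace V" by (rule lsub_subspace[OF V])
  have Vl2: "V \<subseteq> l2" using V by (simp add: lsub_def)
  obtain B where B: "B \<subseteq> V" "V.independent B" "V \<subseteq> V.span B" "card B = V.dim V" by (rule V.basis_exists)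
  have Lsum: "L (\<Sum>b\<in>S. (\<lambda>n. u b * b n)) = (\<Sum>b\<in>S. (\<lambda>n. u b * L b n))" if S: "finite S" "S \<subseteq> V" for S u
  proof -
    have e1: "(\<Sum>b\<in>S. (\<lambda>n. u b * b n)) = (\<lambda>n. \<Sum>b\<in>S. u b * b n)" by (rule ext) (simp add: sum_app)
    have e2: "(\<Sum>b\<in>S. (\<lambda>n. u b * L b n)) = (\<lambda>n. \<Sum>b\<in>S. u b * L b n)" by (rule ext) (simp add: sum_app)
    show ?thesis unfolding e1 e2 by (rule bop_sum[OF L S(1)]) (use S(2) Vl2 in auto)
  qed
  have injB: "inj_on L B"
  proof
    fix a b assume ab: "a \<in> B" "b \<in> B" "L a = L b"
    have abl: "a \<in> l2" "b \<in> l2" using ab B(1) Vl2 by auto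
    have d: "a - b \<in> V" using V.subspace_diff[OF sV] ab B(1) by auto
    have "L (a - b) = (\<lambda>_. 0)" using bop_sub[OF L abl] ab(3) by (simp add: fun_diff_def)
    then have "a - b = (\<lambda>_. 0)" using inj d by blast
    then show "a = b" by (simp add: fun_eq_iff)
  qed
  have indLB: "V.independent (L ` B)"
    unfolding V.independent_explicit_finite_subsets
  proof (intro allI impI ballI)
    fix S u v assume S: "S \<subseteq> L ` B" "finite S" and su: "(\<Sum>v\<in>S. (\<lambda>n. u v * v n)) = 0" and v: "v \<in> S"
    obtain S' where S': "S' \<subseteq> B" "finite S'" "S = L ` S'" using finite_subset_image[OF S(2,1)] by blast
    have injS': "inj_on L S'" using inj_on_subset[OF injB S'(1)] .
    have "(\<Sum>v\<in>S. (\<lambda>n. u v * v n)) = (\<Sum>b\<in>S'. (\<lambda>n. u (L b) * L b n))"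
      unfolding S'(3) by (rule sum.reindex[OF injS', unfolded o_def])
    also have "\<dots> = L (\<Sum>b\<in>S'. (\<lambda>n. u (L b) * b n))"
      by (rule Lsum[symmetric]) (use S' B(1) in auto)
    finally have L0: "L (\<Sum>b\<in>S'. (\<lambda>n. u (L b) * b n)) = (\<lambda>_. 0)" using su by (simp add: zero_fun_def)
    have inV: "(\<Sum>b\<in>S'. (\<lambda>n. u (L b) * b n)) \<in> V"
      by (rule V.subspace_sum[OF sV]) (use V.subspace_scale[OF sV] S'(1) B(1) in auto)
    have s0: "(\<Sum>b\<in>S'. (\<lambda>n. u (L b) * b n)) = 0" using inj inV L0 by (simp add: zero_fun_def)
    have indB: "\<forall>S\<subseteq>B. finite S \<longrightarrow> (\<forall>u. (\<Sum>v\<in>S. (\<lambda>n. u v * v n)) = 0 \<longrightarrow> (\<forall>v\<in>S. u v = 0))"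
      using B(2) unfolding V.independent_explicit_finite_subsets .
    note i2 = indB[rule_format]
    obtain b where b: "b \<in> S'" "v = L b" using v S'(3) by auto
    show "u v = 0" using i2[OF S'(1) S'(2) s0 b(1)] b(2) by simp
  qed
  have LBsp: "L ` B \<subseteq> V.span G" using img B(1) cspan_eq[OF G] by auto
  have fc: "finite (L ` B) \<and> card (L ` B) \<le> card G" by (rule V.independent_span_bound[OF G indLB LBsp])
  have fB: "finite B" using fc finite_imageD[OF _ injB] by blast
  have cB: "card B \<le> card G" using fc card_image[OF injB] by simp
  show ?thesis using fB cB B(1,3) cspan_eq[OF fB] by blast
qed

lemma compact_idem_finite_rank:
  assumes Q: "bop Q" "compact_op Q" "\<forall>z. Q (Q z) = Q z"
  shows "\<exists>G. finite G \<and> G \<subseteq> l2 \<and> Q ` l2 \<subseteq> cspan G"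
proof -
  obtain F where F: "bop F" "finite_rank F" "\<forall>x\<in>l2. l2norm (Q x - F x) \<le> (1/2) * l2norm x"
    using Q(2) unfolding compact_op_def by (meson divide_pos_pos zero_less_one zero_less_numeral)
  obtain GF where GF: "finite GF" "GF \<subseteq> l2" "F ` l2 \<subseteq> cspan GF" using F(2) by (auto simp: finite_rank_def)
  have V: "lsub (Q ` l2)" by (rule lsub_range[OF Q(1)])
  have Vl2: "Q ` l2 \<subseteq> l2" using V by (simp add: lsub_def)
  have inj: "\<forall>x\<in>Q ` l2. F x = (\<lambda>_. 0) \<longrightarrow> x = (\<lambda>_. 0)"
  proof (intro ballI impI)
    fix x assume x: "x \<in> Q ` l2" and Fx: "F x = (\<lambda>_. 0)"
    have xl: "x \<in> l2" using x Vl2 by auto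
    have Qx: "Q x = x" using x Q(3) by auto
    have h: "l2norm (Q x - F x) \<le> (1/2) * l2norm x" using F(3) xl by blast
    have "Q x - F x = x" using Qx Fx by (simp add: fun_diff_def)
    then have "l2norm x \<le> (1/2) * l2norm x" using h by simp
    then have "l2norm x = 0" using l2norm_nonneg[OF xl] by simp
    then show "x = (\<lambda>_. 0)" using l2norm_zero_iff[OF xl] by simp
  qed
  obtain B where B: "finite B" "B \<subseteq> Q ` l2" "Q ` l2 \<subseteq> cspan B"
    using inj_dim[OF V F(1) GF(1) _ inj] GF(3) Vl2 by blast
  then show ?thesis using Vl2 by blast
qed

lemma rk_attained:
  assumes "finite G" "G \<subseteq> l2" "T ` l2 \<subseteq> cspan G"
  shows "\<exists>G0. finite G0 \<and> card G0 = rk T \<and> G0 \<subseteq> l2 \<and> T ` l2 \<subseteq> cspan G0"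
proof -
  have "\<exists>n F. finite F \<and> card F = n \<and> F \<subseteq> l2 \<and> T ` l2 \<subseteq> cspan F" using assms by blast
  then show ?thesis unfolding rk_def by (rule LeastI_ex)
qed

lemma rk_le:
  assumes "finite G" "G \<subseteq> l2" "T ` l2 \<subseteq> cspan G"
  shows "rk T \<le> card G"
  unfolding rk_def by (rule Least_le) (use assms in blast)

lemma rank_compare:
  assumes R: "bop R" and Q: "bop Q" and U: "bop U"
    and G: "finite G" "G \<subseteq> l2" "Q ` l2 \<subseteq> cspan G"
    and lt: "rk Q < rk R"
  shows "\<exists>x\<in>R ` l2. x \<noteq> (\<lambda>_. 0) \<and> Q (U x) = (\<lambda>_. 0)"
proof (rule ccontr)
  assume "\<not> ?thesis"
  then have inj: "\<forall>x\<in>R ` l2. (Q \<circ> U) x = (\<lambda>_. 0) \<longrightarrow> x = (\<lambda>_. 0)" by auto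
  obtain G0 where G0: "finite G0" "card G0 = rk Q" "G0 \<subseteq> l2" "Q ` l2 \<subseteq> cspan G0"
    using rk_attained[OF G] by blast
  have V: "lsub (R ` l2)" by (rule lsub_range[OF R])
  have Vl2: "R ` l2 \<subseteq> l2" using V by (simp add: lsub_def)
  have img: "\<forall>x\<in>R ` l2. (Q \<circ> U) x \<in> cspan G0"
  proof
    fix x assume "x \<in> R ` l2"
    then have "U x \<in> l2" using bop_l2[OF U] Vl2 by auto
    then show "(Q \<circ> U) x \<in> cspan G0" using G0(4) by auto
  qed
  obtain B where B: "finite B" "B \<subseteq> R ` l2" "card B \<le> card G0" "R ` l2 \<subseteq> cspan B"
    using inj_dim[OF V bop_comp[OF Q U] G0(1) img inj] by blast
  have "rk R \<le> card B" by (rule rk_le) (use B Vl2 in auto)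
  then show False using B(3) G0(2) lt by simp
qed

lemma ident_bop: "bop ident"
  unfolding bop_def ident_def
proof (intro conjI ballI allI impI)
  show "\<exists>C. \<forall>x\<in>l2. l2norm (if x \<in> l2 then x else (\<lambda>_. 0)) \<le> C * l2norm x"
    by (rule exI[of _ 1]) simp
qed (auto simp: l2_add(1) l2_scale(1))

lemma ident_l2: "x \<in> l2 \<Longrightarrow> ident x = x"
  by (simp add: ident_def)

lemma bop_opminus: assumes A: "bop A" and B: "bop B" shows "bop (opminus A B)"
proof -
  obtain CA where CA: "CA \<ge> 0" "\<forall>x\<in>l2. l2norm (A x) \<le> CA * l2norm x" using bop_bound[OF A] by blast
  obtain CB where CB: "CB \<ge> 0" "\<forall>x\<in>l2. l2norm (B x) \<le> CB * l2norm x" using bop_bound[OF B] by blast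
  show ?thesis unfolding bop_def opminus_def
  proof (intro conjI ballI allI impI)
    fix x assume x: "x \<in> l2"
    show "(\<lambda>n. A x n - B x n) \<in> l2" by (rule l2_sub(1)[OF bop_l2[OF A x] bop_l2[OF B x]])
    fix c show "(\<lambda>n. A (\<lambda>n. c * x n) n - B (\<lambda>n. c * x n) n) = (\<lambda>n. c * (\<lambda>n. A x n - B x n) n)"
      using bop_scale[OF A x] bop_scale[OF B x] by (simp add: algebra_simps)
  next
    fix x assume "x \<notin> l2" then show "(\<lambda>n. A x n - B x n) = (\<lambda>_. 0)" using bop_out[OF A] bop_out[OF B] by simp
  next
    fix x y assume x: "x \<in> l2" and y: "y \<in> l2"
    show "(\<lambda>n. A (\<lambda>n. x n + y n) n - B (\<lambda>n. x n + y n) n) = (\<lambda>n. (\<lambda>n. A x n - B x n) n + (\<lambda>n. A y n - B y n) n)"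
      using bop_add[OF A x y] bop_add[OF B x y] by (simp add: algebra_simps)
  next
    have "\<forall>x\<in>l2. l2norm (\<lambda>n. A x n - B x n) \<le> (CA + CB) * l2norm x"
    proof
      fix x assume x: "x \<in> l2"
      have "l2norm (\<lambda>n. A x n - B x n) \<le> l2norm (A x) + l2norm (B x)"
        by (rule l2_sub(2)[OF bop_l2[OF A x] bop_l2[OF B x]])
      also have "\<dots> \<le> CA * l2norm x + CB * l2norm x" using CA CB x by (intro add_mono) auto
      finally show "l2norm (\<lambda>n. A x n - B x n) \<le> (CA + CB) * l2norm x" by (simp add: algebra_simps)
    qed
    then show "\<exists>C. \<forall>x\<in>l2. l2norm (\<lambda>n. A x n - B x n) \<le> C * l2norm x" by blast
  qed
qed

lemma l2norm_neg: "l2norm (\<lambda>n. - z n) = l2norm z"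
  unfolding l2norm_def by simp

lemma compact_op_swap:
  assumes "compact_op (opminus A B)" shows "compact_op (opminus B A)"
  unfolding compact_op_def
proof (intro allI impI)
  fix e :: real assume e: "e > 0"
  obtain F where F: "bop F" "finite_rank F" "\<forall>x\<in>l2. l2norm (opminus A B x - F x) \<le> e * l2norm x"
    using assms e unfolding compact_op_def by blast
  define F' where "F' = (\<lambda>x n. (-1) * F x n)"
  have bF': "bop F'" unfolding F'_def bop_def
  proof (intro conjI ballI allI impI)
    fix x assume x: "x \<in> l2"
    show "(\<lambda>n. (-1) * F x n) \<in> l2" by (rule l2_scale(1)[OF bop_l2[OF F(1) x]])
    fix c show "(\<lambda>n. (-1) * F (\<lambda>n. c * x n) n) = (\<lambda>n. c * (\<lambda>n. (-1) * F x n) n)"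
      using bop_scale[OF F(1) x] by simp
  next
    fix x assume "x \<notin> l2" then show "(\<lambda>n. (-1) * F x n) = (\<lambda>_. 0)" using bop_out[OF F(1)] by simp
  next
    fix x y assume x: "x \<in> l2" and y: "y \<in> l2"
    show "(\<lambda>n. (-1) * F (\<lambda>n. x n + y n) n) = (\<lambda>n. (\<lambda>n. (-1) * F x n) n + (\<lambda>n. (-1) * F y n) n)"
      using bop_add[OF F(1) x y] by simp
  next
    obtain C where "\<forall>x\<in>l2. l2norm (F x) \<le> C * l2norm x" using F(1) by (auto simp: bop_def)
    then show "\<exists>C. \<forall>x\<in>l2. l2norm (\<lambda>n. (-1) * F x n) \<le> C * l2norm x"
      using l2norm_neg by (intro exI[of _ C]) simp
  qed
  have fF': "finite_rank F'"
  proof -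
    obtain G where G: "finite G" "G \<subseteq> l2" "F ` l2 \<subseteq> cspan G" using F(2) by (auto simp: finite_rank_def)
    have "F' ` l2 \<subseteq> cspan G" unfolding F'_def using G(3) cspan_scale by blast
    then show ?thesis unfolding finite_rank_def using G(1,2) by blast
  qed
  have "\<forall>x\<in>l2. l2norm (opminus B A x - F' x) \<le> e * l2norm x"
  proof
    fix x assume x: "x \<in> l2"
    have eq: "opminus B A x - F' x = (\<lambda>n. - (opminus A B x - F x) n)"
      by (simp add: F'_def opminus_def fun_diff_def fun_eq_iff)
    have h: "l2norm (opminus A B x - F x) \<le> e * l2norm x" using F(3) x by blast
    have "l2norm (opminus B A x - F' x) = l2norm (opminus A B x - F x)"
      unfolding eq by (rule l2norm_neg)
    then show "l2norm (opminus B A x - F' x) \<le> e * l2norm x" using h by linarith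
  qed
  then show "\<exists>F. bop F \<and> finite_rank F \<and> (\<forall>x\<in>l2. l2norm (opminus B A x - F x) \<le> e * l2norm x)"
    using bF' fF' by blast
qed

definition defect :: "op \<Rightarrow> op" where
  "defect v = opminus ident (adj v \<circ> v)"

lemma defect_bop: "bop v \<Longrightarrow> bop (defect v)"
  unfolding defect_def by (intro bop_opminus ident_bop bop_comp adj_bop)

lemma defect_eq: "bop v \<Longrightarrow> x \<in> l2 \<Longrightarrow> adj v (v x) = (\<lambda>n. x n - defect v x n)"
  by (simp add: defect_def opminus_def ident_l2)

lemma norm_identity:
  assumes v: "bop v" and x: "x \<in> l2"
  shows "(l2norm (v x))\<^sup>2 = (l2norm x)\<^sup>2 - Re (l2inner x (defect v x))"
proof -
  have vx: "v x \<in> l2" using bop_l2[OF v x] .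
  have dx: "defect v x \<in> l2" using bop_l2[OF defect_bop[OF v] x] .
  have "complex_of_real ((l2norm (v x))\<^sup>2) = l2inner (v x) (v x)" using inner_self[OF vx] by simp
  also have "\<dots> = l2inner x (adj v (v x))" by (rule adj_rel[OF v x vx])
  also have "\<dots> = l2inner x x - l2inner x (defect v x)"
    unfolding defect_eq[OF v x] by (rule inner_sub_right[OF x dx x])
  also have "\<dots> = complex_of_real ((l2norm x)\<^sup>2) - l2inner x (defect v x)" using inner_self[OF x] by simp
  finally have "complex_of_real ((l2norm (v x))\<^sup>2) = complex_of_real ((l2norm x)\<^sup>2) - l2inner x (defect v x)" .
  then have "Re (complex_of_real ((l2norm (v x))\<^sup>2)) = Re (complex_of_real ((l2norm x)\<^sup>2) - l2inner x (defect v x))"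
    by simp
  then show ?thesis by simp
qed

lemma norm_identity_bounds:
  assumes v: "bop v" and x: "x \<in> l2"
  shows "(l2norm (v x))\<^sup>2 \<ge> (l2norm x)\<^sup>2 - l2norm x * l2norm (defect v x)"
    "(l2norm (v x))\<^sup>2 \<le> (l2norm x)\<^sup>2 + l2norm x * l2norm (defect v x)"
proof -
  have dx: "defect v x \<in> l2" using bop_l2[OF defect_bop[OF v] x] .
  have "\<bar>Re (l2inner x (defect v x))\<bar> \<le> l2norm x * l2norm (defect v x)"
    using abs_Re_le_cmod[of "l2inner x (defect v x)"] cauchy_schwarz[OF x dx] by linarith
  then show "(l2norm (v x))\<^sup>2 \<ge> (l2norm x)\<^sup>2 - l2norm x * l2norm (defect v x)"
    "(l2norm (v x))\<^sup>2 \<le> (l2norm x)\<^sup>2 + l2norm x * l2norm (defect v x)"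
    using norm_identity[OF v x] by linarith+
qed

lemma finite_index_facts:
  assumes "finite_index_pi v"
  shows "bop v" "finite_rank (defect v)"
  using assms by (auto simp: finite_index_pi_def partial_isometry_def defect_def)

lemma arith_final:
  fixes a b y :: real
  assumes "0 \<le> a" "0 \<le> b" "0 \<le> y" "y \<le> a + b" "a\<^sup>2 \<le> 1/8" "b \<le> 1/10" "y\<^sup>2 \<ge> 9/10"
  shows False
proof -
  have h1: "y\<^sup>2 \<le> (a + b)\<^sup>2" using assms by (intro power_mono) auto
  have h0: "0 \<le> (a - b)\<^sup>2" by simp
  have h2: "(a + b)\<^sup>2 \<le> 2 * a\<^sup>2 + 2 * b\<^sup>2" using h0 unfolding power2_sum power2_diff by linarith
  have h3: "b\<^sup>2 \<le> (1/10)\<^sup>2" using assms by (intro power_mono) auto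
  show False using h1 h2 h3 assms(5,7) by (simp add: power_divide)
qed

lemma one_side:
  assumes U1: "usc \<Phi>1" and U2: "usc \<Phi>2"
    and C1: "\<forall>a\<in>c0. compact_op (\<Phi>1 a)"
    and v1: "bop v1" "finite_rank (defect v1)"
    and v2: "bop v2" "finite_rank (defect v2)"
    and K: "\<forall>a\<in>linf. compact_op (opminus (v1 \<circ> \<Phi>1 a \<circ> adj v1) (v2 \<circ> \<Phi>2 a \<circ> adj v2))"
  shows "\<exists>N. \<forall>k\<ge>N. rk (\<Phi>2 (Pk k)) \<le> rk (\<Phi>1 (Pk k))"
proof (rule ccontr)
  assume neg: "\<not> ?thesis"
  interpret P1: usc \<Phi>1 by (rule U1)
  interpret P2: usc \<Phi>2 by (rule U2)
  define Kset where "Kset = {k. rk (\<Phi>1 (chi {k})) < rk (\<Phi>2 (chi {k}))}"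
  have infK: "\<exists>k\<ge>N. k \<in> Kset" for N using neg by (auto simp: Kset_def Pk_chi not_le)
  define U where "U = adj v1 \<circ> v2"
  have bU: "bop U" unfolding U_def by (intro bop_comp adj_bop v1 v2)
  obtain CU where CU: "CU \<ge> 0" "\<forall>x\<in>l2. l2norm (U x) \<le> CU * l2norm x" using bop_bound[OF bU] by blast
  obtain C2 where C2: "C2 \<ge> 0" "\<forall>x\<in>l2. l2norm (v2 x) \<le> C2 * l2norm x" using bop_bound[OF v2(1)] by blast
  have Qfr: "\<exists>G. finite G \<and> G \<subseteq> l2 \<and> \<Phi>1 (chi {k}) ` l2 \<subseteq> cspan G" for k
    by (rule compact_idem_finite_rank[OF P1.bopP]) (use C1 chi_c0 P1.idemP in auto)
  have exx: "\<exists>x. x \<in> \<Phi>2 (chi {k}) ` l2 \<and> l2norm x = 1 \<and> \<Phi>1 (chi {k}) (U x) = (\<lambda>_. 0)" if kK: "k \<in> Kset" for k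
  proof -
    obtain G where G: "finite G" "G \<subseteq> l2" "\<Phi>1 (chi {k}) ` l2 \<subseteq> cspan G" using Qfr by blast
    have lt: "rk (\<Phi>1 (chi {k})) < rk (\<Phi>2 (chi {k}))" using kK by (simp add: Kset_def)
    obtain x where x: "x \<in> \<Phi>2 (chi {k}) ` l2" "x \<noteq> (\<lambda>_. 0)" "\<Phi>1 (chi {k}) (U x) = (\<lambda>_. 0)"
      using rank_compare[OF P2.bopP P1.bopP bU G lt] by blast
    have V: "lsub (\<Phi>2 (chi {k}) ` l2)" by (rule lsub_range[OF P2.bopP])
    have xl: "x \<in> l2" using x(1) V by (auto simp: lsub_def)
    define r where "r = l2norm x"
    have r: "r > 0" using l2norm_nonneg[OF xl] l2norm_zero_iff[OF xl] x(2) unfolding r_def by auto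
    define c where "c = complex_of_real (1 / r)"
    define x' where "x' = (\<lambda>n. c * x n)"
    have x'V: "x' \<in> \<Phi>2 (chi {k}) ` l2" using V x(1) unfolding x'_def lsub_def by blast
    have "l2norm x' = cmod c * l2norm x" unfolding x'_def by (rule l2_scale(2)[OF xl])
    also have "\<dots> = 1" using r unfolding r_def c_def by (simp add: norm_divide)
    finally have x'n: "l2norm x' = 1" .
    have "\<Phi>1 (chi {k}) (U x') = \<Phi>1 (chi {k}) (\<lambda>n. c * U x n)"
      unfolding x'_def by (simp only: bop_scale[OF bU xl])
    also have "\<dots> = (\<lambda>n. c * \<Phi>1 (chi {k}) (U x) n)"
      by (rule bop_scale[OF P1.bopP bop_l2[OF bU xl]])
    finally have "\<Phi>1 (chi {k}) (U x') = (\<lambda>n. c * \<Phi>1 (chi {k}) (U x) n)" .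
    then have "\<Phi>1 (chi {k}) (U x') = (\<lambda>_. 0)" using x(3) by simp
    then show ?thesis using x'V x'n by blast
  qed
  define xs where "xs k = (if k \<in> Kset then (SOME x. x \<in> \<Phi>2 (chi {k}) ` l2 \<and> l2norm x = 1 \<and> \<Phi>1 (chi {k}) (U x) = (\<lambda>_. 0)) else (\<lambda>_. 0))" for k
  have xsK: "xs k \<in> \<Phi>2 (chi {k}) ` l2 \<and> l2norm (xs k) = 1 \<and> \<Phi>1 (chi {k}) (U (xs k)) = (\<lambda>_. 0)" if "k \<in> Kset" for k
    using someI_ex[OF exx[OF that]] that by (simp add: xs_def)
  have xs_l2: "xs k \<in> l2" for k
  proof (cases "k \<in> Kset")
    case True then show ?thesis using xsK[OF True] P2.l2P by auto
  next
    case False then show ?thesis by (simp add: xs_def l2_zero)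
  qed
  have xs_fix: "\<Phi>2 (chi {k}) (xs k) = xs k" for k
  proof (cases "k \<in> Kset")
    case True
    then obtain w where "xs k = \<Phi>2 (chi {k}) w" using xsK[OF True] by auto
    then show ?thesis using P2.idemP by simp
  next
    case False then show ?thesis using bop_zero[OF P2.bopP] by (simp add: xs_def)
  qed
  have xs_nb: "l2norm (xs k) \<le> 1" for k
    using xsK[of k] by (cases "k \<in> Kset") (auto simp: xs_def l2_zero)
  have wx: "wnull xs"
    unfolding wnull_def
  proof (intro conjI allI ballI)
    show "xs k \<in> l2" for k by (rule xs_l2)
    fix z assume z: "z \<in> l2"
    show "(\<lambda>k. l2inner z (xs k)) \<longlonglongrightarrow> 0"
    proof (rule null_cmp[OF P2.pkP[OF z]], intro always_eventually allI)
      fix k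
      have "l2inner z (xs k) = l2inner z (\<Phi>2 (chi {k}) (xs k))" using xs_fix by simp
      also have "\<dots> = l2inner (\<Phi>2 (chi {k}) z) (xs k)" using P2.selfadjP[OF z xs_l2] by simp
      finally have "norm (l2inner z (xs k)) \<le> l2norm (\<Phi>2 (chi {k}) z) * l2norm (xs k)"
        using cauchy_schwarz[OF P2.l2P[OF z] xs_l2] by simp
      also have "\<dots> \<le> l2norm (\<Phi>2 (chi {k}) z) * 1"
        by (intro mult_left_mono xs_nb l2norm_nonneg P2.l2P z)
      finally show "norm (l2inner z (xs k)) \<le> l2norm (\<Phi>2 (chi {k}) z)" by simp
    qed
  qed
  have wU: "wnull (\<lambda>k. U (xs k))" by (rule wnull_bop[OF bU wx])
  have Ub: "\<forall>k. l2norm (U (xs k)) \<le> CU"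
  proof
    fix k
    have "l2norm (U (xs k)) \<le> CU * l2norm (xs k)" using CU xs_l2 by auto
    also have "\<dots> \<le> CU * 1" by (intro mult_left_mono xs_nb CU(1))
    finally show "l2norm (U (xs k)) \<le> CU" by simp
  qed
  define cond where "cond m k \<longleftrightarrow> l2norm (\<Phi>1 (chi {..<Suc m}) (U (xs k))) \<le> 1/8
      \<and> l2norm (\<Phi>1 (chi {k..}) (U (xs m))) \<le> 1/8" for m k
  have evc: "eventually (\<lambda>k. cond m k) sequentially" for m
  proof -
    have c1: "(\<lambda>k. l2norm (\<Phi>1 (chi {..<Suc m}) (U (xs k)))) \<longlonglongrightarrow> 0"
      by (rule compact_weak[OF P1.bopP _ wU Ub]) (use C1 chi_c0 in auto)
    have c2: "(\<lambda>k. l2norm (\<Phi>1 (chi {k..}) (U (xs m)))) \<longlonglongrightarrow> 0"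
      by (rule P1.tailP[OF bop_l2[OF bU xs_l2]])
    have e1: "eventually (\<lambda>k. l2norm (\<Phi>1 (chi {..<Suc m}) (U (xs k))) < 1/8) sequentially"
      using c1 by (rule order_tendstoD) simp
    have e2: "eventually (\<lambda>k. l2norm (\<Phi>1 (chi {k..}) (U (xs m))) < 1/8) sequentially"
      using c2 by (rule order_tendstoD) simp
    show ?thesis using e1 e2 by eventually_elim (auto simp: cond_def)
  qed
  have exn: "\<exists>k. k \<in> Kset \<and> m < k \<and> cond m k" for m
  proof -
    obtain N where N: "\<forall>k\<ge>N. cond m k" using evc[of m] unfolding eventually_sequentially by blast
    obtain k where k: "k \<ge> max N (Suc m)" "k \<in> Kset" using infK by blast
    then show ?thesis using N by (intro exI[of _ k]) auto
  qed
  define nxt where "nxt m = (SOME k. k \<in> Kset \<and> m < k \<and> cond m k)" for m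
  have nxt: "nxt m \<in> Kset \<and> m < nxt m \<and> cond m (nxt m)" for m
    unfolding nxt_def by (rule someI_ex[OF exn])
  obtain k0 where k0: "k0 \<in> Kset" using infK by blast
  define s where "s = rec_nat k0 (\<lambda>_ m. nxt m)"
  have s0: "s 0 = k0" and sS: "s (Suc i) = nxt (s i)" for i by (simp_all add: s_def)
  have sK: "s i \<in> Kset" for i by (cases i) (simp_all add: s0 sS k0 nxt)
  have smono: "strict_mono s" unfolding strict_mono_Suc_iff using sS nxt by simp
  have scond: "cond (s i) (s (Suc i))" for i using sS nxt by simp
  define S where "S = range s"
  define X where "X i = xs (s i)" for i
  have Xl2: "X i \<in> l2" for i by (simp add: X_def xs_l2)
  have Xn: "l2norm (X i) = 1" for i using xsK[OF sK] by (simp add: X_def)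
  have XQ: "\<Phi>1 (chi {s i}) (U (X i)) = (\<lambda>_. 0)" for i using xsK[OF sK] by (simp add: X_def)
  have Xfix: "\<Phi>2 (chi S) (X i) = X i" for i
  proof -
    have "\<Phi>2 (chi S) (X i) = \<Phi>2 (chi S) (\<Phi>2 (chi {s i}) (X i))" using xs_fix by (simp add: X_def)
    also have "\<dots> = \<Phi>2 (chi (S \<inter> {s i})) (X i)" by (rule P2.multP)
    also have "S \<inter> {s i} = {s i}" by (auto simp: S_def)
    finally show ?thesis using xs_fix by (simp add: X_def)
  qed
  have wX: "wnull X"
    unfolding wnull_def
  proof (intro conjI allI ballI)
    show "X i \<in> l2" for i by (rule Xl2)
    fix z assume z: "z \<in> l2"
    have "(\<lambda>k. l2inner z (xs k)) \<longlonglongrightarrow> 0" using wx z by (simp add: wnull_def)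
    from LIMSEQ_subseq_LIMSEQ[OF this smono]
    show "(\<lambda>i. l2inner z (X i)) \<longlonglongrightarrow> 0" by (simp add: X_def o_def)
  qed
  define W where "W i = \<Phi>1 (chi S) (U (X i))" for i
  have Wl2: "W i \<in> l2" for i unfolding W_def by (intro P1.l2P bop_l2[OF bU] Xl2)
  have Wsmall: "l2norm (W i) \<le> 1/4" for i
  proof -
    define z where "z = U (X i)"
    have z: "z \<in> l2" unfolding z_def by (rule bop_l2[OF bU Xl2])
    define A where "A = S \<inter> {..<s i}"
    define B where "B = S \<inter> {s i<..}"
    have dec: "S = A \<union> ({s i} \<union> B)" unfolding A_def B_def S_def by auto
    have d1: "A \<inter> ({s i} \<union> B) = {}" unfolding A_def B_def by auto
    have d2: "{s i} \<inter> B = {}" unfolding B_def by auto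
    have "\<Phi>1 (chi S) z = (\<lambda>n. \<Phi>1 (chi A) z n + \<Phi>1 (chi ({s i} \<union> B)) z n)"
      using P1.addP[OF d1, of z] dec by simp
    also have "\<Phi>1 (chi ({s i} \<union> B)) z = (\<lambda>n. \<Phi>1 (chi {s i}) z n + \<Phi>1 (chi B) z n)"
      by (rule P1.addP[OF d2])
    also have "\<Phi>1 (chi {s i}) z = (\<lambda>_. 0)" using XQ by (simp add: z_def)
    finally have Wd: "W i = (\<lambda>n. \<Phi>1 (chi A) z n + \<Phi>1 (chi B) z n)" by (simp add: W_def z_def)
    have nB: "l2norm (\<Phi>1 (chi B) z) \<le> 1/8"
    proof -
      have "B \<subseteq> {s (Suc i)..}"
      proof
        fix x assume "x \<in> B"
        then obtain l where l: "x = s l" "s i < s l" unfolding B_def S_def by auto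
        then have "Suc i \<le> l" using strict_mono_less[OF smono] by simp
        then show "x \<in> {s (Suc i)..}" using l(1) strict_mono_less_eq[OF smono] by simp
      qed
      then have "l2norm (\<Phi>1 (chi B) z) \<le> l2norm (\<Phi>1 (chi {s (Suc i)..}) z)" by (rule P1.monoP[OF z])
      also have "\<dots> \<le> 1/8" using scond[of i] by (simp add: cond_def z_def X_def)
      finally show ?thesis .
    qed
    have nA: "l2norm (\<Phi>1 (chi A) z) \<le> 1/8"
    proof (cases i)
      case 0
      have "A = {}"
      proof -
        have "\<not> s l < s 0" for l using strict_mono_less[OF smono, of l 0] by simp
        then show ?thesis unfolding A_def S_def 0 by auto
      qed
      then show ?thesis using P1.emptyP l2_zero by simp
    next
      case (Suc j)
      have "A \<subseteq> {..<Suc (s j)}"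
      proof
        fix x assume "x \<in> A"
        then obtain l where l: "x = s l" "s l < s (Suc j)" unfolding A_def S_def Suc by auto
        then have "l \<le> j" using strict_mono_less[OF smono] by simp
        then have "s l \<le> s j" using strict_mono_less_eq[OF smono] by simp
        then show "x \<in> {..<Suc (s j)}" using l(1) by simp
      qed
      then have "l2norm (\<Phi>1 (chi A) z) \<le> l2norm (\<Phi>1 (chi {..<Suc (s j)}) z)" by (rule P1.monoP[OF z])
      also have "\<dots> \<le> 1/8" using scond[of j] by (simp add: cond_def z_def X_def Suc)
      finally show ?thesis .
    qed
    have "l2norm (W i) \<le> l2norm (\<Phi>1 (chi A) z) + l2norm (\<Phi>1 (chi B) z)"
      unfolding Wd by (rule l2_add(2)[OF P1.l2P[OF z] P1.l2P[OF z]])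
    then show ?thesis using nA nB by simp
  qed
  define Y where "Y i = v2 (X i)" for i
  have Yl2: "Y i \<in> l2" for i unfolding Y_def by (rule bop_l2[OF v2(1) Xl2])
  have wY: "wnull Y" unfolding Y_def by (rule wnull_bop[OF v2(1) wX])
  have Yb: "\<forall>i. l2norm (Y i) \<le> C2"
  proof
    fix i
    have "l2norm (v2 (X i)) \<le> C2 * l2norm (X i)" using C2(2) Xl2 by blast
    then show "l2norm (Y i) \<le> C2" using Xn by (simp add: Y_def)
  qed
  have wW: "wnull W"
  proof -
    have "wnull (\<lambda>i. (\<Phi>1 (chi S) \<circ> U) (X i))" by (rule wnull_bop[OF bop_comp[OF P1.bopP bU] wX])
    moreover have "W = (\<lambda>i. \<Phi>1 (chi S) (U (X i)))" by (simp add: W_def fun_eq_iff)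
    ultimately show ?thesis by simp
  qed
  define Kop where "Kop = opminus (v1 \<circ> \<Phi>1 (chi S) \<circ> adj v1) (v2 \<circ> \<Phi>2 (chi S) \<circ> adj v2)"
  have bK: "bop Kop" unfolding Kop_def
    by (intro bop_opminus bop_comp adj_bop v1(1) v2(1) P1.bopP P2.bopP)
  have cK: "compact_op Kop" unfolding Kop_def using K chi_linf by blast
  define E where "E i = \<Phi>2 (chi S) (defect v2 (X i))" for i
  have El2: "E i \<in> l2" for i unfolding E_def by (intro P2.l2P bop_l2[OF defect_bop[OF v2(1)]] Xl2)
  have Kexp: "Kop (Y i) = (\<lambda>n. v1 (W i) n - (Y i n - v2 (E i) n))" for i
  proof -
    have dl: "defect v2 (X i) \<in> l2" by (rule bop_l2[OF defect_bop[OF v2(1)] Xl2])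
    have e1: "adj v1 (Y i) = U (X i)" by (simp add: U_def Y_def)
    have e2: "adj v2 (Y i) = (\<lambda>n. X i n - defect v2 (X i) n)" unfolding Y_def by (rule defect_eq[OF v2(1) Xl2])
    have e3: "\<Phi>2 (chi S) (\<lambda>n. X i n - defect v2 (X i) n) = (\<lambda>n. X i n - E i n)"
      using bop_sub[OF P2.bopP Xl2 dl] Xfix by (simp add: E_def)
    have e4: "v2 (\<lambda>n. X i n - E i n) = (\<lambda>n. Y i n - v2 (E i) n)"
      using bop_sub[OF v2(1) Xl2 El2] by (simp add: Y_def)
    show ?thesis unfolding Kop_def opminus_def using e1 e2 e3 e4 by (simp add: W_def)
  qed
  have lim1: "(\<lambda>i. l2norm (defect v2 (X i))) \<longlonglongrightarrow> 0"
    by (rule finite_rank_weak[OF defect_bop[OF v2(1)] v2(2) wX])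
  have lim2: "(\<lambda>i. l2norm (defect v1 (W i))) \<longlonglongrightarrow> 0"
    by (rule finite_rank_weak[OF defect_bop[OF v1(1)] v1(2) wW])
  have lim3: "(\<lambda>i. l2norm (Kop (Y i))) \<longlonglongrightarrow> 0"
    by (rule compact_weak[OF bK cK wY Yb])
  have lim4: "(\<lambda>i. l2norm (v2 (E i))) \<longlonglongrightarrow> 0"
  proof (rule null_cmp)
    show "(\<lambda>i. C2 * l2norm (defect v2 (X i))) \<longlonglongrightarrow> 0"
      using tendsto_mult[OF tendsto_const lim1, of C2] by simp
    show "\<forall>\<^sub>F i in sequentially. norm (l2norm (v2 (E i))) \<le> C2 * l2norm (defect v2 (X i))"
    proof (intro always_eventually allI)
      fix i
      have dl: "defect v2 (X i) \<in> l2" by (rule bop_l2[OF defect_bop[OF v2(1)] Xl2])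
      have "l2norm (v2 (E i)) \<le> C2 * l2norm (E i)" using C2 El2 by auto
      also have "\<dots> \<le> C2 * l2norm (defect v2 (X i))"
        unfolding E_def by (intro mult_left_mono P2.contrP dl C2(1))
      finally show "norm (l2norm (v2 (E i))) \<le> C2 * l2norm (defect v2 (X i))"
        using l2norm_nonneg[OF bop_l2[OF v2(1) El2]] by simp
    qed
  qed
  have ev1: "eventually (\<lambda>i. l2norm (defect v2 (X i)) < 1/10) sequentially"
    using lim1 by (rule order_tendstoD) simp
  have ev2: "eventually (\<lambda>i. l2norm (defect v1 (W i)) < 1/4) sequentially"
    using lim2 by (rule order_tendstoD) simp
  have ev3: "eventually (\<lambda>i. l2norm (Kop (Y i)) < 1/20) sequentially"
    using lim3 by (rule order_tendstoD) simp
  have ev4: "eventually (\<lambda>i. l2norm (v2 (E i)) < 1/20) sequentially"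
    using lim4 by (rule order_tendstoD) simp
  have "eventually (\<lambda>i. False) sequentially"
    using ev1 ev2 ev3 ev4
  proof eventually_elim
    case (elim i)
    have v1W: "v1 (W i) \<in> l2" by (rule bop_l2[OF v1(1) Wl2])
    have KY: "Kop (Y i) \<in> l2" by (rule bop_l2[OF bK Yl2])
    have v2E: "v2 (E i) \<in> l2" by (rule bop_l2[OF v2(1) El2])
    have ya: "(l2norm (Y i))\<^sup>2 \<ge> 9/10"
    proof -
      have "(l2norm (Y i))\<^sup>2 \<ge> (l2norm (X i))\<^sup>2 - l2norm (X i) * l2norm (defect v2 (X i))"
        unfolding Y_def by (rule norm_identity_bounds(1)[OF v2(1) Xl2])
      then show ?thesis using Xn elim(1) by simp
    qed
    have wa: "(l2norm (v1 (W i)))\<^sup>2 \<le> 1/8"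
    proof -
      have "(l2norm (v1 (W i)))\<^sup>2 \<le> (l2norm (W i))\<^sup>2 + l2norm (W i) * l2norm (defect v1 (W i))"
        by (rule norm_identity_bounds(2)[OF v1(1) Wl2])
      moreover have "(l2norm (W i))\<^sup>2 \<le> (1/4)\<^sup>2" by (intro power_mono Wsmall l2norm_nonneg Wl2)
      moreover have "l2norm (W i) * l2norm (defect v1 (W i)) \<le> (1/4) * (1/4)"
        using elim(2) by (intro mult_mono Wsmall l2norm_nonneg Wl2 bop_l2[OF defect_bop[OF v1(1)]]) auto
      ultimately show ?thesis by (simp add: power2_eq_square)
    qed
    have db: "l2norm (\<lambda>n. Y i n - v1 (W i) n) \<le> 1/10"
    proof -
      have "(\<lambda>n. Y i n - v1 (W i) n) = (\<lambda>n. v2 (E i) n - Kop (Y i) n)" using Kexp[of i] by (simp add: fun_eq_iff)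
      then have "l2norm (\<lambda>n. Y i n - v1 (W i) n) \<le> l2norm (v2 (E i)) + l2norm (Kop (Y i))"
        using l2_sub(2)[OF v2E KY] by simp
      then show ?thesis using elim(3,4) by simp
    qed
    have yb: "l2norm (Y i) \<le> l2norm (v1 (W i)) + l2norm (\<lambda>n. Y i n - v1 (W i) n)"
    proof -
      have "Y i = (\<lambda>n. v1 (W i) n + (Y i n - v1 (W i) n))" by simp
      then show ?thesis using l2_add(2)[OF v1W l2_sub(1)[OF Yl2 v1W]] by simp
    qed
    show False
      by (rule arith_final[OF l2norm_nonneg[OF v1W] l2norm_nonneg[OF l2_sub(1)[OF Yl2 v1W]] l2norm_nonneg[OF Yl2] yb wa db ya])
  qed
  then show False by (simp add: eventually_sequentially)
qed

theorem lemma3p2: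
  fixes \<Phi>1 \<Phi>2 :: "vec \<Rightarrow> op" and v1 v2 :: op
  assumes "strongly_continuous \<Phi>1" and "strongly_continuous \<Phi>2"
    and "unital_star_hom \<Phi>1" and "unital_star_hom \<Phi>2"
    and "\<forall>a\<in>c0. compact_op (\<Phi>1 a)" and "\<forall>a\<in>c0. compact_op (\<Phi>2 a)"
    and "finite_index_pi v1" and "finite_index_pi v2"
    and "\<forall>a\<in>linf. compact_op (opminus (v1 \<circ> \<Phi>1 a \<circ> adj v1) (v2 \<circ> \<Phi>2 a \<circ> adj v2))"
  shows "\<exists>N. \<forall>k\<ge>N. rk (\<Phi>1 (Pk k)) = rk (\<Phi>2 (Pk k))"
proof -
  have U1: "usc \<Phi>1" unfolding usc_def usc_axioms_def ush_def using assms(1,3) by simp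
  have U2: "usc \<Phi>2" unfolding usc_def usc_axioms_def ush_def using assms(2,4) by simp
  note f1 = finite_index_facts[OF assms(7)]
  note f2 = finite_index_facts[OF assms(8)]
  have K': "\<forall>a\<in>linf. compact_op (opminus (v2 \<circ> \<Phi>2 a \<circ> adj v2) (v1 \<circ> \<Phi>1 a \<circ> adj v1))"
    using assms(9) compact_op_swap by blast
  obtain N1 where N1: "\<forall>k\<ge>N1. rk (\<Phi>2 (Pk k)) \<le> rk (\<Phi>1 (Pk k))"
    using one_side[OF U1 U2 assms(5) f1 f2 assms(9)] by blast
  obtain N2 where N2: "\<forall>k\<ge>N2. rk (\<Phi>1 (Pk k)) \<le> rk (\<Phi>2 (Pk k))"
    using one_side[OF U2 U1 assms(6) f2 f1 K'] by blast
  show ?thesis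
  proof (intro exI[of _ "max N1 N2"] allI impI)
    fix k assume "max N1 N2 \<le> k"
    then show "rk (\<Phi>1 (Pk k)) = rk (\<Phi>2 (Pk k))" using N1 N2 by (meson antisym max.boundedE)
  qed
qed

end
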